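(* Let $\alpha\le2$ and let $\{\mu_t\}_{t\in[0,T]}$ be the limit family from the definition of approximative solutions below. Then $\{\mu_t\}$ is steadily flowing: there is a full-measure set $A\subset[0,T]$ such that for every $t_0\in A$ and every $0\le\phi\in C_c^\infty(\mathbb{R}^d)$, the family of finite Radon measures $\rho_{t_0,t}[\phi](B):=\int_{B\times\mathbb{R}^d}\phi(v)\,d\big(T^{t_0,t}_\#\mu_t\big)(x,v)$ ($B\subset\mathbb{R}^d$ Borel), with $T^{t_0,t}(x,v)=(x-(t-t_0)v,v)$, is narrowly continuous at $t=t_0$ as a function of $t$ restricted to $A$; i.e. for every sequence $A\ni t_n\to t_0$ and every bounded continuous $\xi:\mathbb{R}^d\to\mathbb{R}$, $\int\xi\,d\rho_{t_0,t_n}[\phi]\to\int\xi\,d\rho_{t_0,t_0}[\phi]$.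
   Context: Setting: $T>0$, $\alpha\in[1,2]$, $d\ge1$, $\psi(s)=s^{-\alpha}$. $F_\#\mu$ is the pushforward $F_\#\mu(B)=\mu(F^{-1}(B))$. Particle system: $\dot x_i=v_i$, $\dot v_i=\frac1N\sum_{j\ne i}\psi(|x_i-x_j|)(v_j-v_i)$ (unique smooth non-collisional global solutions for distinct initial positions). Atomic solution: $\mu^N_t=\frac1N\sum_i\delta_{x_i^N(t)}\otimes\delta_{v_i^N(t)}$, $\mu^N=\mu^N_t\otimes\lambda^1(t)$, where $\mu=\mu_t\otimes\lambda^1(t)$ means $\int g\,d\mu=\int_0^T\int g(t,\cdot)d\mu_t\,dt$. $E[\mu_t]=\int|v|^2d\mu_t$. Approximative solutions: given compactly supported $\rho_0\in\mathcal{P}(\mathbb{R}^d)$ and $u_0\in L^\infty(\rho_0;\mathbb{R}^d)$, for each $N$ take initial data $(x_{i0}^N,v_{i0}^N)_{i=1}^N$ with pairwise distinct $x_{i0}^N$ such that $\frac1N\sum_i\delta_{x_{i0}^N}\rightharpoonup\rho_0$ and $\frac1N\sum_iv_{i0}^N\delta_{x_{i0}^N}\rightharpoonup u_0\rho_0$ narrowly, with all $\mu^N_t$ supported in $(T+1)B(M)\times B(M)$ for a fixed $M$; let $\mu^N$ be the associated atomic solutions, and pass to a subsequence (not relabeled) such that: $\mu^N\rightharpoonup\mu=\mu_t\otimes\lambda^1(t)$ narrowly; $[\mu^N_t\otimes\mu^N_t]\otimes\lambda^1(t)\rightharpoonup[\mu_t\otimes\mu_t]\otimes\lambda^1(t)$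 narrowly; $\rho^N_t:=\int_{\mathbb{R}^d_v}d\mu^N_t\to\rho_t$ in $C([0,T];(\mathcal{M}_+(\mathbb{R}^d),d_{BL}))$; and $E[\mu^N_t]\to E[\mu_t]$ for all $t$ in a full-measure set $A_E$. $B(r)$ is the open ball of radius $r$ at $0$, $d_{BL}$ the bounded-Lipschitz distance, narrow convergence = convergence against bounded continuous functions. *)

theory Defs
  imports "HOL-Probability.Probability"
begin

definition psi :: "real \<Rightarrow> real \<Rightarrow> real" where
  "psi \<alpha> s = s powr (-\<alpha>)"

definition particle_solution ::
  "real \<Rightarrow> real \<Rightarrow> nat \<Rightarrow> (nat \<Rightarrow> real \<Rightarrow> 'a::euclidean_space) \<Rightarrow> (nat \<Rightarrow> real \<Rightarrow> 'a) \<Rightarrow> bool" where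
  "particle_solution \<alpha> T N x v \<longleftrightarrow>
     (\<forall>i<N. \<forall>j<N. i \<noteq> j \<longrightarrow> (\<forall>t\<in>{0..T}. x i t \<noteq> x j t)) \<and>
     (\<forall>i<N. \<forall>t\<in>{0..T}.
        (x i has_vector_derivative v i t) (at t within {0..T}) \<and>
        (v i has_vector_derivative
           ((1 / real N) *\<^sub>R (\<Sum>j\<in>{..<N} - {i}. psi \<alpha> (norm (x i t - x j t)) *\<^sub>R (v j t - v i t))))
          (at t within {0..T}))"

definition bl_test :: "('a::metric_space \<Rightarrow> real) \<Rightarrow> bool" where
  "bl_test f \<longleftrightarrow> (\<forall>x. \<bar>f x\<bar> \<le> 1) \<and> (\<forall>x y. \<bar>f x - f y\<bar> \<le> dist x y)"

text \<open>C^infinity: all iterated partial derivatives (along basis directions) exist and are continuous.\<close>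
definition smooth_fun :: "('a::euclidean_space \<Rightarrow> real) \<Rightarrow> bool" where
  "smooth_fun f \<longleftrightarrow> (\<exists>D :: 'a list \<Rightarrow> 'a \<Rightarrow> real.
      D [] = f \<and>
      (\<forall>ds. continuous_on UNIV (D ds)) \<and>
      (\<forall>ds b y. b \<in> Basis \<longrightarrow>
          ((\<lambda>s. D ds (y + s *\<^sub>R b)) has_real_derivative D (b # ds) y) (at 0)))"

definition test_function :: "('a::euclidean_space \<Rightarrow> real) \<Rightarrow> bool" where
  "test_function \<phi> \<longleftrightarrow> smooth_fun \<phi> \<and> compact (closure {y. \<phi> y \<noteq> 0})"

definition transport :: "real \<Rightarrow> real \<Rightarrow> 'a::euclidean_space \<times> 'a \<Rightarrow> 'a \<times> 'a" where
  "transport t0 t z = (fst z - (t - t0) *\<^sub>R snd z, snd z)"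

text \<open>rho_{t0,t}[phi](B) = integral over B x R^d of phi(v) d(T^{t0,t}_# mu_t)(x,v).\<close>
definition rho_phi :: "(real \<Rightarrow> ('a::euclidean_space \<times> 'a) measure) \<Rightarrow> real \<Rightarrow> real \<Rightarrow> ('a \<Rightarrow> real) \<Rightarrow> 'a measure" where
  "rho_phi \<mu> t0 t \<phi> =
     distr (density (distr (\<mu> t) borel (transport t0 t)) (\<lambda>z. ennreal (\<phi> (snd z)))) borel fst"

definition steadily_flowing :: "real \<Rightarrow> (real \<Rightarrow> ('a::euclidean_space \<times> 'a) measure) \<Rightarrow> bool" where
  "steadily_flowing T \<mu> \<longleftrightarrow>
     (\<exists>A. A \<subseteq> {0..T} \<and> {0..T} - A \<in> null_sets lborel \<and>
        (\<forall>t0\<in>A. \<forall>\<phi>. test_function \<phi> \<and> (\<forall>y. 0 \<le> \<phi> y) \<longrightarrow>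
           (\<forall>ts. (\<forall>n. ts n \<in> A) \<and> ts \<longlonglongrightarrow> t0 \<longrightarrow>
              (\<forall>\<xi> :: 'a \<Rightarrow> real. continuous_on UNIV \<xi> \<and> bounded (range \<xi>) \<longrightarrow>
                 (\<lambda>n. \<integral>y. \<xi> y \<partial>rho_phi \<mu> t0 (ts n) \<phi>) \<longlonglongrightarrow> (\<integral>y. \<xi> y \<partial>rho_phi \<mu> t0 t0 \<phi>)))))"

end

theory Submission
  imports Defs
begin


lemma FL:
  fixes g :: "real \<Rightarrow> real" and T B :: real
  assumes g_meas: "g \<in> borel_measurable (restrict_space lborel {0..T})"
    and bnd: "\<And>t. t\<in>{0..T} \<Longrightarrow> \<bar>g t\<bar> \<le> B"
    and int0: "\<And>ch. continuous_on UNIV ch \<Longrightarrow> bounded (range ch) \<Longrightarrow>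
         set_lebesgue_integral lborel {0..T} (\<lambda>t. ch t * g t) = 0"
  shows "AE t in lborel. t \<in> {0..T} \<longrightarrow> g t = 0"
proof -
  define h where "h t = indicator {0..T} t * g t" for t
  have hm[measurable]: "h \<in> borel_measurable lborel"
    using g_meas unfolding h_def
    by (subst (asm) borel_measurable_restrict_space_iff) auto
  have hb: "\<bar>h t\<bar> \<le> indicator {0..T} t * B" for t
    using bnd by (auto simp: h_def indicator_def)
  have intB: "integrable lborel (\<lambda>t. indicator {0..T} t * B)"
    by (intro integrable_mult_left integrable_real_indicator) (auto simp: emeasure_lborel_Icc_eq)
  have hint: "integrable lborel h"
    by (rule Bochner_Integration.integrable_bound[OF intB]) (use hb in \<open>auto intro!: AE_I2 intro: order_trans[OF _ abs_ge_self]\<close>)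
  have h0: "(\<integral>u. ch u * h u \<partial>lborel) = 0" if "continuous_on UNIV ch" "bounded (range ch)" for ch
    using int0[OF that] unfolding set_lebesgue_integral_def h_def
    by (simp add: mult_ac)
  have hx: "(\<integral>u. indicator {x<..} u * h u \<partial>lborel) = 0" for x :: real
  proof -
    define s where "s j u = min 1 (max 0 (real j * (u - x))) * h u" for j :: nat and u
    have "(\<lambda>j. \<integral>u. s j u \<partial>lborel) \<longlonglongrightarrow> (\<integral>u. indicator {x<..} u * h u \<partial>lborel)"
    proof (rule integral_dominated_convergence[where w="\<lambda>u. \<bar>h u\<bar>"])
      show "integrable lborel (\<lambda>u. \<bar>h u\<bar>)" using hint by auto
      show "(\<lambda>u. indicator {x<..} u * h u) \<in> borel_measurable lborel" by measurable
      show "s j \<in> borel_measurable lborel" for j unfolding s_def by measurable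
      show "AE u in lborel. norm (s j u) \<le> \<bar>h u\<bar>" for j
        by (intro AE_I2) (auto simp: s_def abs_mult intro!: mult_left_le_one_le)
      show "AE u in lborel. (\<lambda>j. s j u) \<longlonglongrightarrow> indicator {x<..} u * h u"
      proof (intro AE_I2)
        fix u show "(\<lambda>j. s j u) \<longlonglongrightarrow> indicator {x<..} u * h u"
        proof (cases "u > x")
          case True
          obtain j0 :: nat where "1 / (u - x) < j0" using reals_Archimedean2 by blast
          have "1 \<le> real j * (u - x)" if "j \<ge> j0" for j
          proof -
            have "1 < real j0 * (u - x)" using \<open>1 / (u - x) < j0\<close> True by (simp add: field_simps)
            also have "\<dots> \<le> real j * (u - x)" using that True by (intro mult_right_mono) auto
            finally show ?thesis by simp
          qed
          then have "\<forall>j\<ge>j0. s j u = indicator {x<..} u * h u"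
            using True by (auto simp: s_def)
          then show ?thesis by (intro tendsto_eventually) (auto simp: eventually_sequentially)
        next
          case False
          then have "s j u = indicator {x<..} u * h u" for j
            by (auto simp: s_def mult_nonneg_nonpos)
          then show ?thesis by simp
        qed
      qed
    qed
    moreover have "(\<integral>u. s j u \<partial>lborel) = 0" for j
      unfolding s_def
    proof (rule h0)
      show "continuous_on UNIV (\<lambda>u. min 1 (max 0 (real j * (u - x))))"
        by (intro continuous_intros)
      show "bounded (range (\<lambda>u. min 1 (max 0 (real j * (u - x)))))"
        unfolding bounded_iff by (intro exI[of _ 1]) auto
    qed
    ultimately show ?thesis
      by (simp add: LIMSEQ_const_iff)
  qed
  define hp where "hp u = max 0 (h u)" for u
  define hn where "hn u = max 0 (- h u)" for u
  have [measurable]: "hp \<in> borel_measurable lborel" "hn \<in> borel_measurable lborel"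
    unfolding hp_def hn_def by measurable
  have hpi: "integrable lborel (\<lambda>u. indicator A u * hp u)" if [measurable]: "A \<in> sets borel" for A
    by (rule Bochner_Integration.integrable_bound[OF hint])
       (auto intro!: AE_I2 simp: hp_def indicator_def)
  have hni: "integrable lborel (\<lambda>u. indicator A u * hn u)" if [measurable]: "A \<in> sets borel" for A
    by (rule Bochner_Integration.integrable_bound[OF hint])
       (auto intro!: AE_I2 simp: hn_def indicator_def)
  have em: "emeasure (density lborel (\<lambda>u. ennreal (f u))) {x<..} =
      ennreal (\<integral>u. indicator {x<..} u * f u \<partial>lborel)"
    if "\<And>A. A \<in> sets borel \<Longrightarrow> integrable lborel (\<lambda>u. indicator A u * f u)" "\<And>u. f u \<ge> 0" "f \<in> borel_measurable lborel" for f :: "real \<Rightarrow> real" and x :: real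
  proof -
    have "emeasure (density lborel (\<lambda>u. ennreal (f u))) {x<..} =
        (\<integral>\<^sup>+u. ennreal (indicator {x<..} u * f u) \<partial>lborel)"
      using that(3) by (subst emeasure_density) (auto intro!: nn_integral_cong borel_open simp: indicator_def open_greaterThan)
    also have "\<dots> = ennreal (\<integral>u. indicator {x<..} u * f u \<partial>lborel)"
      using that(1)[of "{x<..}"] that(2) by (intro nn_integral_eq_integral) auto
    finally show ?thesis .
  qed
  have "density lborel (\<lambda>u. ennreal (hp u)) = density lborel (\<lambda>u. ennreal (hn u))"
  proof (rule measure_eqI_lessThan)
    show "sets (density lborel (\<lambda>u. ennreal (hp u))) = sets borel" by simp
    show "sets (density lborel (\<lambda>u. ennreal (hn u))) = sets borel" by simp
    show "emeasure (density lborel (\<lambda>u. ennreal (hp u))) {x<..} < \<infinity>" for x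
      by (subst em[OF hpi]) (auto simp: hp_def)
    show "emeasure (density lborel (\<lambda>u. ennreal (hp u))) {x<..} =
        emeasure (density lborel (\<lambda>u. ennreal (hn u))) {x<..}" for x
    proof -
      have "(\<integral>u. indicator {x<..} u * hp u \<partial>lborel) - (\<integral>u. indicator {x<..} u * hn u \<partial>lborel)
          = (\<integral>u. indicator {x<..} u * h u \<partial>lborel)"
        by (subst Bochner_Integration.integral_diff[symmetric, OF hpi hni])
           (auto intro!: Bochner_Integration.integral_cong simp: hp_def hn_def indicator_def)
      then have eq: "(\<integral>u. indicator {x<..} u * hp u \<partial>lborel) = (\<integral>u. indicator {x<..} u * hn u \<partial>lborel)"
        using hx[of x] by simp
      have e1: "emeasure (density lborel (\<lambda>u. ennreal (hp u))) {x<..} = ennreal (\<integral>u. indicator {x<..} u * hp u \<partial>lborel)"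
        by (rule em[OF hpi]) (auto simp: hp_def)
      have e2: "emeasure (density lborel (\<lambda>u. ennreal (hn u))) {x<..} = ennreal (\<integral>u. indicator {x<..} u * hn u \<partial>lborel)"
        by (rule em[OF hni]) (auto simp: hn_def)
      show ?thesis using e1 e2 eq by simp
    qed
  qed
  then have "AE u in lborel. ennreal (hp u) = ennreal (hn u)"
    by (intro sigma_finite_measure.density_unique[OF sigma_finite_lborel]) auto
  then have "AE u in lborel. h u = 0"
    by eventually_elim (auto simp: hp_def hn_def max_def split: if_splits)
  then show ?thesis
    by eventually_elim (auto simp: h_def)
qed




lemma deriv_antimono:
  fixes u u' :: "real \<Rightarrow> real"
  assumes d: "\<And>t. t\<in>{0..T} \<Longrightarrow> (u has_real_derivative u' t) (at t within {0..T})"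
    and n: "\<And>t. t\<in>{0..T} \<Longrightarrow> u' t \<le> 0" and st: "0 \<le> s" "s \<le> t" "t \<le> T"
  shows "u t \<le> u s"
proof (rule DERIV_nonpos_imp_decreasing_open[OF st(2)])
  fix y assume y: "s < y" "y < t"
  then have "at y within {0..T} = at y" using st by (intro at_within_Icc_at) auto
  then show "\<exists>z. (u has_real_derivative z) (at y) \<and> z \<le> 0"
    using d[of y] n[of y] y st by auto
next
  have "continuous_on {0..T} u"
    using d by (meson DERIV_continuous continuous_on_eq_continuous_within)
  then show "continuous_on {s..t} u" by (rule continuous_on_subset) (use st in auto)
qed

lemma theta_deriv:
  fixes x v :: "real \<Rightarrow> 'a::euclidean_space"
  assumes "(x has_vector_derivative x') (at t within S)" "(v has_vector_derivative v') (at t within S)"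
  shows "((\<lambda>t. cos (k \<bullet> x t + l \<bullet> v t + p)) has_real_derivative
           (- sin (k \<bullet> x t + l \<bullet> v t + p) * (k \<bullet> x' + l \<bullet> v'))) (at t within S)"
proof -
  have a: "((\<lambda>t. k \<bullet> x t) has_vector_derivative k \<bullet> x') (at t within S)"
    using bounded_bilinear.has_vector_derivative[OF bounded_bilinear_inner has_vector_derivative_const assms(1), of k]
    by simp
  have b: "((\<lambda>t. l \<bullet> v t) has_vector_derivative l \<bullet> v') (at t within S)"
    using bounded_bilinear.has_vector_derivative[OF bounded_bilinear_inner has_vector_derivative_const assms(2), of l]
    by simp
  have "((\<lambda>t. k \<bullet> x t + l \<bullet> v t + p) has_real_derivative (k \<bullet> x' + l \<bullet> v')) (at t within S)"
    using has_vector_derivative_add[OF has_vector_derivative_add[OF a b] has_vector_derivative_const, of p]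
    unfolding has_real_derivative_iff_has_vector_derivative by simp
  from DERIV_chain2[OF DERIV_cos this] show ?thesis by simp
qed

lemma sq_deriv:
  fixes v :: "real \<Rightarrow> 'a::euclidean_space"
  assumes "(v has_vector_derivative v') (at t within S)"
  shows "((\<lambda>t. v t \<bullet> v t) has_real_derivative 2 * (v t \<bullet> v')) (at t within S)"
  using bounded_bilinear.has_vector_derivative[OF bounded_bilinear_inner assms assms]
  unfolding has_real_derivative_iff_has_vector_derivative by (simp add: inner_commute)




lemma sin_lip: "\<bar>sin (a::real) - sin b\<bar> \<le> \<bar>a - b\<bar>"
proof -
  have "\<bar>sin a - sin b\<bar> = 2 * \<bar>sin ((a - b) / 2)\<bar> * \<bar>cos ((a + b) / 2)\<bar>"
    by (simp add: sin_diff_sin abs_mult)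
  also have "\<dots> \<le> 2 * \<bar>(a - b) / 2\<bar> * 1"
    by (intro mult_mono abs_sin_x_le_abs_x) auto
  finally show ?thesis by simp
qed

lemma cos_lip: "\<bar>cos (a::real) - cos b\<bar> \<le> \<bar>a - b\<bar>"
  using sin_lip[of "a + pi/2" "b + pi/2"] by (simp add: sin_add)

lemma sym_sum:
  fixes G W :: "nat \<Rightarrow> 'b::real_inner" and \<psi> :: "nat \<Rightarrow> nat \<Rightarrow> real"
  assumes sym: "\<And>i j. \<psi> i j = \<psi> j i"
  shows "(\<Sum>i<N. \<Sum>j<N. \<psi> i j * (G i \<bullet> (W j - W i))) =
         (\<Sum>i<N. \<Sum>j<N. \<psi> i j * ((G i - G j) \<bullet> (W j - W i))) / 2"
proof -
  have "(\<Sum>i<N. \<Sum>j<N. \<psi> i j * (G j \<bullet> (W j - W i))) = (\<Sum>j<N. \<Sum>i<N. \<psi> i j * (G j \<bullet> (W j - W i)))"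
    by (rule sum.swap)
  also have "\<dots> = - (\<Sum>i<N. \<Sum>j<N. \<psi> i j * (G i \<bullet> (W j - W i)))"
    by (simp add: sum_negf[symmetric] sym inner_diff_right algebra_simps)
  finally have "(\<Sum>i<N. \<Sum>j<N. \<psi> i j * (G j \<bullet> (W j - W i))) = - (\<Sum>i<N. \<Sum>j<N. \<psi> i j * (G i \<bullet> (W j - W i)))" .
  moreover have "(\<Sum>i<N. \<Sum>j<N. \<psi> i j * ((G i - G j) \<bullet> (W j - W i))) =
     (\<Sum>i<N. \<Sum>j<N. \<psi> i j * (G i \<bullet> (W j - W i))) - (\<Sum>i<N. \<Sum>j<N. \<psi> i j * (G j \<bullet> (W j - W i)))"
    by (simp add: sum_subtractf[symmetric] inner_diff_left algebra_simps)
  ultimately show ?thesis by simp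
qed

lemma powr_bound: 
  fixes r e :: real assumes "0 \<le> r" "0 \<le> e" "e \<le> 1" shows "r powr e \<le> 1 + r"
proof (cases "r \<le> 1")
  case True
  then have "r powr e \<le> 1"
    using assms by (cases "r = 0") (auto intro: powr_le1)
  then show ?thesis using assms by simp
next
  case False
  then have "r powr e \<le> r powr 1" using assms by (intro powr_mono) auto
  then show ?thesis using False by simp
qed

lemma psi_sq_bound:
  fixes r \<alpha> :: real assumes "0 \<le> r" "1 \<le> \<alpha>" "\<alpha> \<le> 2"
  shows "psi \<alpha> r * r\<^sup>2 \<le> 1 + r" "0 \<le> psi \<alpha> r"
proof -
  show "0 \<le> psi \<alpha> r" by (simp add: psi_def)
  show "psi \<alpha> r * r\<^sup>2 \<le> 1 + r"
  proof (cases "r = 0")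
    case True then show ?thesis by (simp add: psi_def)
  next
    case False
    then have "psi \<alpha> r * r\<^sup>2 = r powr (2 - \<alpha>)"
      using assms by (simp add: psi_def powr_diff powr_minus divide_simps powr_realpow)
    also have "\<dots> \<le> 1 + r" using assms by (intro powr_bound) auto
    finally show ?thesis .
  qed
qed




lemma term_bound:
  fixes k l Xi Xj Vi Vj :: "'a::euclidean_space" and \<psi> r d ti tj B p :: real
  assumes psi0: "0 \<le> \<psi>" and pr: "\<psi> * r\<^sup>2 \<le> B"
    and r: "r = norm (Xi - Xj)" and d: "d = norm (Vi - Vj)"
    and ti: "ti = k \<bullet> Xi + l \<bullet> Vi + p" and tj: "tj = k \<bullet> Xj + l \<bullet> Vj + p"
  shows "\<bar>\<psi> * ((sin tj - sin ti) * (l \<bullet> (Vj - Vi)))\<bar>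
     \<le> norm l * norm k * B / 2 + (norm l * norm k / 2 + (norm l)\<^sup>2) * (\<psi> * d\<^sup>2)"
proof -
  have th: "\<bar>tj - ti\<bar> \<le> norm k * r + norm l * d"
  proof -
    have "tj - ti = k \<bullet> (Xj - Xi) + l \<bullet> (Vj - Vi)" using ti tj by (simp add: inner_diff_right)
    then have "\<bar>tj - ti\<bar> \<le> \<bar>k \<bullet> (Xj - Xi)\<bar> + \<bar>l \<bullet> (Vj - Vi)\<bar>" by simp
    also have "\<dots> \<le> norm k * norm (Xj - Xi) + norm l * norm (Vj - Vi)"
      by (intro add_mono Cauchy_Schwarz_ineq2)
    finally show ?thesis using r d by (simp add: norm_minus_commute)
  qed
  have ld: "\<bar>l \<bullet> (Vj - Vi)\<bar> \<le> norm l * d"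
    using Cauchy_Schwarz_ineq2[of l "Vj - Vi"] d by (simp add: norm_minus_commute)
  have "\<bar>\<psi> * ((sin tj - sin ti) * (l \<bullet> (Vj - Vi)))\<bar> = \<psi> * (\<bar>sin tj - sin ti\<bar> * \<bar>l \<bullet> (Vj - Vi)\<bar>)"
    using psi0 by (simp add: abs_mult)
  also have "\<dots> \<le> \<psi> * ((norm k * r + norm l * d) * (norm l * d))"
    using psi0 th ld sin_lip[of tj ti]
    by (intro mult_left_mono mult_mono) auto
  also have "\<dots> = norm l * norm k * (\<psi> * r * d) + (norm l)\<^sup>2 * (\<psi> * d\<^sup>2)"
    by (simp add: algebra_simps power2_eq_square)
  also have "\<dots> \<le> norm l * norm k * ((B + \<psi> * d\<^sup>2) / 2) + (norm l)\<^sup>2 * (\<psi> * d\<^sup>2)"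
  proof -
    have "\<psi> * r * d \<le> (\<psi> * r\<^sup>2 + \<psi> * d\<^sup>2) / 2"
    proof -
      have "0 \<le> \<psi> * (r - d)\<^sup>2" using psi0 by simp
      then show ?thesis by (simp add: algebra_simps power2_eq_square)
    qed
    also have "\<dots> \<le> (B + \<psi> * d\<^sup>2) / 2" using pr by simp
    finally show ?thesis by (intro add_right_mono mult_left_mono) auto
  qed
  also have "\<dots> = norm l * norm k * B / 2 + (norm l * norm k / 2 + (norm l)\<^sup>2) * (\<psi> * d\<^sup>2)"
    by (simp add: algebra_simps)
  finally show ?thesis .
qed

lemma pw_bound:
  fixes X V :: "nat \<Rightarrow> 'a::euclidean_space" and k l :: 'a and p \<alpha> M Rd :: real and N :: nat
  assumes N: "N > 0" and al: "1 \<le> \<alpha>" "\<alpha> \<le> 2"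
    and VM: "\<And>i. i < N \<Longrightarrow> norm (V i) \<le> M"
    and XR: "\<And>i j. i < N \<Longrightarrow> j < N \<Longrightarrow> norm (X i - X j) \<le> Rd"
  defines "\<psi> \<equiv> \<lambda>i j. psi \<alpha> (norm (X i - X j))"
    and "Acc \<equiv> \<lambda>i. (1 / real N) *\<^sub>R (\<Sum>j\<in>{..<N} - {i}. psi \<alpha> (norm (X i - X j)) *\<^sub>R (V j - V i))"
    and "\<theta> \<equiv> \<lambda>i. k \<bullet> X i + l \<bullet> V i + p"
    and "D \<equiv> (\<Sum>i<N. \<Sum>j<N. psi \<alpha> (norm (X i - X j)) * (norm (V i - V j))\<^sup>2) / (real N)\<^sup>2"
  shows "(\<Sum>i<N. 2 * (V i \<bullet> Acc i)) / real N = - D" "0 \<le> D"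
    and "\<bar>(\<Sum>i<N. - sin (\<theta> i) * (k \<bullet> V i + l \<bullet> Acc i)) / real N\<bar>
          \<le> norm k * M + norm l * norm k * (1 + Rd) / 4 + norm l * (norm k / 2 + norm l) / 2 * D"
proof -
  have psym: "\<psi> i j = \<psi> j i" for i j by (simp add: \<psi>_def norm_minus_commute)
  have psi0: "0 \<le> \<psi> i j" for i j by (simp add: \<psi>_def psi_def)
  have Acc_full: "Acc i = (1 / real N) *\<^sub>R (\<Sum>j<N. \<psi> i j *\<^sub>R (V j - V i))" for i
  proof -
    have "(\<Sum>j\<in>{..<N} - {i}. \<psi> i j *\<^sub>R (V j - V i)) = (\<Sum>j<N. \<psi> i j *\<^sub>R (V j - V i))"
      by (rule sum.mono_neutral_left) auto
    then show ?thesis by (simp add: Acc_def \<psi>_def)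
  qed
  show "0 \<le> D" unfolding D_def by (intro divide_nonneg_nonneg sum_nonneg mult_nonneg_nonneg) (auto simp: psi_def)
  have "(\<Sum>i<N. 2 * (V i \<bullet> Acc i)) = (2 / real N) * (\<Sum>i<N. \<Sum>j<N. \<psi> i j * (V i \<bullet> (V j - V i)))"
    by (simp add: Acc_full inner_sum_right sum_distrib_left algebra_simps)
  also have "\<dots> = (2 / real N) * ((\<Sum>i<N. \<Sum>j<N. \<psi> i j * ((V i - V j) \<bullet> (V j - V i))) / 2)"
    by (subst sym_sum[OF psym]) simp
  also have "\<dots> = - (1 / real N) * (\<Sum>i<N. \<Sum>j<N. \<psi> i j * (norm (V i - V j))\<^sup>2)"
  proof -
    have "(V i - V j) \<bullet> (V j - V i) = - (norm (V i - V j))\<^sup>2" for i j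
      by (simp add: power2_norm_eq_inner inner_diff_left inner_diff_right inner_commute)
    then show ?thesis by (simp add: sum_negf)
  qed
  finally show "(\<Sum>i<N. 2 * (V i \<bullet> Acc i)) / real N = - D"
    using N by (simp add: D_def \<psi>_def power2_eq_square)
  define G where "G i = (- sin (\<theta> i)) *\<^sub>R l" for i
  define c where "c = norm l * norm k * (1 + Rd) / 2"
  define c' where "c' = norm l * norm k / 2 + (norm l)\<^sup>2"
  have S1: "(\<Sum>i<N. - sin (\<theta> i) * (l \<bullet> Acc i)) = (1 / real N) * (\<Sum>i<N. \<Sum>j<N. \<psi> i j * (G i \<bullet> (V j - V i)))"
    by (simp add: Acc_full G_def inner_sum_right sum_distrib_left algebra_simps)
  also have "\<dots> = (1 / real N) * ((\<Sum>i<N. \<Sum>j<N. \<psi> i j * ((sin (\<theta> j) - sin (\<theta> i)) * (l \<bullet> (V j - V i)))) / 2)"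
    by (subst sym_sum[OF psym]) (simp add: G_def algebra_simps)
  finally have S1': "(\<Sum>i<N. - sin (\<theta> i) * (l \<bullet> Acc i)) = (1 / real N) * ((\<Sum>i<N. \<Sum>j<N. \<psi> i j * ((sin (\<theta> j) - sin (\<theta> i)) * (l \<bullet> (V j - V i)))) / 2)" .
  have tb: "\<bar>\<psi> i j * ((sin (\<theta> j) - sin (\<theta> i)) * (l \<bullet> (V j - V i)))\<bar> \<le> c + c' * (\<psi> i j * (norm (V i - V j))\<^sup>2)"
    if "i < N" "j < N" for i j
  proof -
    have pr: "\<psi> i j * (norm (X i - X j))\<^sup>2 \<le> 1 + Rd"
      using psi_sq_bound(1)[of "norm (X i - X j)" \<alpha>] al XR[OF that] by (simp add: \<psi>_def)
    show ?thesis
      using term_bound[OF psi0 pr refl refl, where ti="\<theta> i" and tj="\<theta> j" and k=k and l=l and p=p]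
      unfolding c_def c'_def by (simp add: \<theta>_def)
  qed
  have "\<bar>\<Sum>i<N. \<Sum>j<N. \<psi> i j * ((sin (\<theta> j) - sin (\<theta> i)) * (l \<bullet> (V j - V i)))\<bar>
       \<le> (\<Sum>i<N. \<Sum>j<N. c + c' * (\<psi> i j * (norm (V i - V j))\<^sup>2))"
    by (rule order_trans[OF sum_abs]) (auto intro!: sum_mono order_trans[OF sum_abs] tb)
  also have "\<dots> = (real N)\<^sup>2 * c + c' * (\<Sum>i<N. \<Sum>j<N. \<psi> i j * (norm (V i - V j))\<^sup>2)"
    by (simp add: sum.distrib sum_distrib_left power2_eq_square)
  also have "\<dots> = (real N)\<^sup>2 * (c + c' * D)"
    using N by (simp add: D_def \<psi>_def algebra_simps)
  finally have B2: "\<bar>\<Sum>i<N. \<Sum>j<N. \<psi> i j * ((sin (\<theta> j) - sin (\<theta> i)) * (l \<bullet> (V j - V i)))\<bar> \<le> (real N)\<^sup>2 * (c + c' * D)" .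
  have B1: "\<bar>\<Sum>i<N. - sin (\<theta> i) * (k \<bullet> V i)\<bar> \<le> real N * (norm k * M)"
  proof -
    have "\<bar>\<Sum>i<N. - sin (\<theta> i) * (k \<bullet> V i)\<bar> \<le> (\<Sum>i<N. norm k * M)"
    proof (rule order_trans[OF sum_abs], rule sum_mono)
      fix i assume "i \<in> {..<N}"
      then have "norm (V i) \<le> M" using VM by auto
      have "\<bar>- sin (\<theta> i) * (k \<bullet> V i)\<bar> \<le> 1 * (norm k * norm (V i))"
        unfolding abs_mult by (intro mult_mono Cauchy_Schwarz_ineq2) auto
      also have "\<dots> \<le> norm k * M" using \<open>norm (V i) \<le> M\<close> by (simp add: mult_left_mono)
      finally show "\<bar>- sin (\<theta> i) * (k \<bullet> V i)\<bar> \<le> norm k * M" .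
    qed
    then show ?thesis by simp
  qed
  have split: "(\<Sum>i<N. - sin (\<theta> i) * (k \<bullet> V i + l \<bullet> Acc i)) =
      (\<Sum>i<N. - sin (\<theta> i) * (k \<bullet> V i)) + (\<Sum>i<N. - sin (\<theta> i) * (l \<bullet> Acc i))"
    by (simp add: sum.distrib[symmetric] algebra_simps)
  have "\<bar>(\<Sum>i<N. - sin (\<theta> i) * (k \<bullet> V i + l \<bullet> Acc i)) / real N\<bar>
      \<le> \<bar>\<Sum>i<N. - sin (\<theta> i) * (k \<bullet> V i)\<bar> / real N + \<bar>\<Sum>i<N. - sin (\<theta> i) * (l \<bullet> Acc i)\<bar> / real N"
    unfolding split using N by (simp add: add_divide_distrib[symmetric] abs_triangle_ineq divide_right_mono)
  also have "\<dots> \<le> norm k * M + (c + c' * D) / 2"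
  proof (rule add_mono)
    show "\<bar>\<Sum>i<N. - sin (\<theta> i) * (k \<bullet> V i)\<bar> / real N \<le> norm k * M"
      using B1 N by (simp add: divide_simps mult_ac)
    have "\<bar>\<Sum>i<N. - sin (\<theta> i) * (l \<bullet> Acc i)\<bar> / real N
        = \<bar>\<Sum>i<N. \<Sum>j<N. \<psi> i j * ((sin (\<theta> j) - sin (\<theta> i)) * (l \<bullet> (V j - V i)))\<bar> / (2 * (real N)\<^sup>2)"
      unfolding S1' using N by (simp add: abs_mult power2_eq_square)
    also have "\<dots> \<le> (real N)\<^sup>2 * (c + c' * D) / (2 * (real N)\<^sup>2)"
      using B2 N by (intro divide_right_mono) auto
    also have "\<dots> = (c + c' * D) / 2" using N by simp
    finally show "\<bar>\<Sum>i<N. - sin (\<theta> i) * (l \<bullet> Acc i)\<bar> / real N \<le> (c + c' * D) / 2" .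
  qed
  also have "\<dots> = norm k * M + norm l * norm k * (1 + Rd) / 4 + norm l * (norm k / 2 + norm l) / 2 * D"
    by (simp add: c_def c'_def field_simps power2_eq_square)
  finally show "\<bar>(\<Sum>i<N. - sin (\<theta> i) * (k \<bullet> V i + l \<bullet> Acc i)) / real N\<bar>
          \<le> norm k * M + norm l * norm k * (1 + Rd) / 4 + norm l * (norm k / 2 + norm l) / 2 * D" .
qed




lemma dyn:
  fixes \<alpha> T M :: real and N :: nat and x v :: "nat \<Rightarrow> real \<Rightarrow> 'a::euclidean_space"
    and k l :: 'a and p :: real
  assumes N: "N > 0" and al: "1 \<le> \<alpha>" "\<alpha> \<le> 2" and ps: "particle_solution \<alpha> T N x v"
    and bnd: "\<And>i t. i < N \<Longrightarrow> t \<in> {0..T} \<Longrightarrow> x i t \<in> ball 0 ((T + 1) * M) \<and> v i t \<in> ball 0 M"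
  defines "E \<equiv> \<lambda>t. (\<Sum>i<N. (norm (v i t))\<^sup>2) / real N"
    and "f \<equiv> \<lambda>t. (\<Sum>i<N. cos (k \<bullet> x i t + l \<bullet> v i t + p)) / real N"
  shows "continuous_on {0..T} E" "continuous_on {0..T} f"
    and "\<And>s t. 0 \<le> s \<Longrightarrow> s \<le> t \<Longrightarrow> t \<le> T \<Longrightarrow> E t \<le> E s"
    and "\<And>s t. 0 \<le> s \<Longrightarrow> s \<le> t \<Longrightarrow> t \<le> T \<Longrightarrow>
       \<bar>f t - f s\<bar> \<le> (norm k * M + norm l * norm k * (1 + 2 * ((T + 1) * M)) / 4) * (t - s)
                     + (norm l * (norm k / 2 + norm l) / 2) * (E s - E t)"
proof -
  define Acc where "Acc i t = (1 / real N) *\<^sub>R (\<Sum>j\<in>{..<N} - {i}. psi \<alpha> (norm (x i t - x j t)) *\<^sub>R (v j t - v i t))" for i t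
  define D where "D t = (\<Sum>i<N. \<Sum>j<N. psi \<alpha> (norm (x i t - x j t)) * (norm (v i t - v j t))\<^sup>2) / (real N)\<^sup>2" for t
  define C0 where "C0 = norm k * M + norm l * norm k * (1 + 2 * ((T + 1) * M)) / 4"
  define C1 where "C1 = norm l * (norm k / 2 + norm l) / 2"
  have dx: "(x i has_vector_derivative v i t) (at t within {0..T})" and dv: "(v i has_vector_derivative Acc i t) (at t within {0..T})"
    if "i < N" "t \<in> {0..T}" for i t
    using ps that unfolding particle_solution_def Acc_def by auto
  have pw: "(\<Sum>i<N. 2 * (v i t \<bullet> Acc i t)) / real N = - D t" "0 \<le> D t"
       "\<bar>(\<Sum>i<N. - sin (k \<bullet> x i t + l \<bullet> v i t + p) * (k \<bullet> v i t + l \<bullet> Acc i t)) / real N\<bar> \<le> C0 + C1 * D t"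
    if t: "t \<in> {0..T}" for t
  proof -
    have VM: "norm (v i t) \<le> M" if "i < N" for i using bnd[OF that t] by auto
    have XR: "norm (x i t - x j t) \<le> 2 * ((T + 1) * M)" if "i < N" "j < N" for i j
    proof -
      have "norm (x i t - x j t) \<le> norm (x i t) + norm (x j t)" by (rule norm_triangle_ineq4)
      also have "\<dots> \<le> 2 * ((T + 1) * M)" using bnd[OF that(1) t] bnd[OF that(2) t] by auto
      finally show ?thesis .
    qed
    note P = pw_bound[OF N al VM XR]
    show "(\<Sum>i<N. 2 * (v i t \<bullet> Acc i t)) / real N = - D t" "0 \<le> D t"
      using P(1,2) unfolding Acc_def D_def by auto
    show "\<bar>(\<Sum>i<N. - sin (k \<bullet> x i t + l \<bullet> v i t + p) * (k \<bullet> v i t + l \<bullet> Acc i t)) / real N\<bar> \<le> C0 + C1 * D t"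
      using P(3) unfolding Acc_def D_def C0_def C1_def by auto
  qed
  have dE: "(E has_real_derivative (- D t)) (at t within {0..T})" if t: "t \<in> {0..T}" for t
  proof -
    have "((\<lambda>t. (\<Sum>i<N. v i t \<bullet> v i t) / real N) has_real_derivative (\<Sum>i<N. 2 * (v i t \<bullet> Acc i t)) / real N) (at t within {0..T})"
      by (intro DERIV_cdivide DERIV_sum sq_deriv dv) (use t in auto)
    then show ?thesis using pw(1)[OF t] by (simp add: E_def power2_norm_eq_inner)
  qed
  define f' where "f' t = (\<Sum>i<N. - sin (k \<bullet> x i t + l \<bullet> v i t + p) * (k \<bullet> v i t + l \<bullet> Acc i t)) / real N" for t
  have df: "(f has_real_derivative f' t) (at t within {0..T})" if t: "t \<in> {0..T}" for t
    unfolding f_def f'_def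
    by (intro DERIV_cdivide DERIV_sum theta_deriv dv dx) (use t in auto)
  show "continuous_on {0..T} E"
    using dE by (meson DERIV_continuous continuous_on_eq_continuous_within)
  show "continuous_on {0..T} f"
    using df by (meson DERIV_continuous continuous_on_eq_continuous_within)
  show "E t \<le> E s" if "0 \<le> s" "s \<le> t" "t \<le> T" for s t
    by (rule deriv_antimono[OF dE _ that]) (use pw(2) in auto)
  show "\<bar>f t - f s\<bar> \<le> (norm k * M + norm l * norm k * (1 + 2 * ((T + 1) * M)) / 4) * (t - s)
                     + (norm l * (norm k / 2 + norm l) / 2) * (E s - E t)" if st: "0 \<le> s" "s \<le> t" "t \<le> T" for s t
  proof -
    have "(\<lambda>t. f t - C0 * t + C1 * E t) t \<le> (\<lambda>t. f t - C0 * t + C1 * E t) s"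
    proof (rule deriv_antimono[OF _ _ st])
      fix u assume u: "u \<in> {0..T}"
      show "((\<lambda>t. f t - C0 * t + C1 * E t) has_real_derivative (f' u - C0 + C1 * (- D u))) (at u within {0..T})"
        using DERIV_add[OF DERIV_diff[OF df[OF u] DERIV_cmult[OF DERIV_ident]] DERIV_cmult[OF dE[OF u]], of C0 C1] by simp
      show "f' u - C0 + C1 * (- D u) \<le> 0" using pw(3)[OF u] unfolding f'_def by linarith
    qed
    moreover have "(\<lambda>t. - f t - C0 * t + C1 * E t) t \<le> (\<lambda>t. - f t - C0 * t + C1 * E t) s"
    proof (rule deriv_antimono[OF _ _ st])
      fix u assume u: "u \<in> {0..T}"
      show "((\<lambda>t. - f t - C0 * t + C1 * E t) has_real_derivative (- f' u - C0 + C1 * (- D u))) (at u within {0..T})"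
        using DERIV_add[OF DERIV_diff[OF DERIV_minus[OF df[OF u]] DERIV_cmult[OF DERIV_ident]] DERIV_cmult[OF dE[OF u]], of C0 C1] by simp
      show "- f' u - C0 + C1 * (- D u) \<le> 0" using pw(3)[OF u] unfolding f'_def by linarith
    qed
    ultimately show ?thesis unfolding C0_def[symmetric] C1_def[symmetric] by (simp add: algebra_simps abs_le_iff)
  qed
qed




locale CS =
  fixes \<alpha> T M :: real and N :: "nat \<Rightarrow> nat" and x v :: "nat \<Rightarrow> nat \<Rightarrow> real \<Rightarrow> 'a::euclidean_space"
    and \<mu> :: "real \<Rightarrow> ('a \<times> 'a) measure"
  assumes Tpos: "T > 0" and al: "1 \<le> \<alpha>" "\<alpha> \<le> 2" and Npos: "\<forall>n. 0 < N n"
    and ps: "\<forall>n. particle_solution \<alpha> T (N n) (x n) (v n)"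
    and bnd: "\<forall>n i t. i < N n \<and> t \<in> {0..T} \<longrightarrow>
           x n i t \<in> ball 0 ((T + 1) * M) \<and> v n i t \<in> ball 0 M"
    and muprob: "\<forall>t\<in>{0..T}. prob_space (\<mu> t) \<and> sets (\<mu> t) = sets borel"
    and weak: "\<forall>g :: real \<times> ('a \<times> 'a) \<Rightarrow> real.
           continuous_on ({0..T} \<times> UNIV) g \<and> bounded (g ` ({0..T} \<times> UNIV)) \<longrightarrow>
             (\<lambda>t. \<integral>z. g (t, z) \<partial>\<mu> t) \<in> borel_measurable (restrict_space lborel {0..T}) \<and>
             (\<lambda>n. set_lebesgue_integral lborel {0..T}
                    (\<lambda>t. (\<Sum>i<N n. g (t, (x n i t, v n i t))) / real (N n)))
               \<longlonglongrightarrow> set_lebesgue_integral lborel {0..T} (\<lambda>t. \<integral>z. g (t, z) \<partial>\<mu> t)"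
    and energy: "AE t in lborel. t \<in> {0..T} \<longrightarrow>
           (\<lambda>n. (\<Sum>i<N n. (norm (v n i t))\<^sup>2) / real (N n)) \<longlonglongrightarrow> (\<integral>z. (norm (snd z))\<^sup>2 \<partial>\<mu> t)"
begin

definition "E n t = (\<Sum>i<N n. (norm (v n i t))\<^sup>2) / real (N n)"
definition "e t = (\<integral>z. (norm (snd z))\<^sup>2 \<partial>\<mu> t)"
definition "F w p n t = (\<Sum>i<N n. cos (w \<bullet> (x n i t, v n i t) + p)) / real (N n)"
definition "Q w p t = (\<integral>z. cos (w \<bullet> z + p) \<partial>\<mu> t)"
definition "C0 w = norm (fst w) * M + norm (snd w) * norm (fst w) * (1 + 2 * ((T + 1) * M)) / 4"
definition "C1 w = norm (snd w) * (norm (fst w) / 2 + norm (snd w)) / 2"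
definition "R = (T + 1) * M + M"

lemma bnd': "i < N n \<Longrightarrow> t \<in> {0..T} \<Longrightarrow> x n i t \<in> ball 0 ((T + 1) * M) \<and> v n i t \<in> ball 0 M"
  using bnd by blast

lemma Mpos: "M > 0"
proof -
  have "v 0 0 0 \<in> ball 0 M" using bnd'[of 0 0 0] Npos Tpos by auto
  then show ?thesis by (simp add: le_less_trans[OF norm_ge_zero])
qed

lemma C_nonneg: "0 \<le> C0 w" "0 \<le> C1 w"
  using Mpos Tpos unfolding C0_def C1_def by auto

lemma prob: "t \<in> {0..T} \<Longrightarrow> prob_space (\<mu> t)" and sets_mu: "t \<in> {0..T} \<Longrightarrow> sets (\<mu> t) = sets borel"
  using muprob by auto

lemma dynE: "0 \<le> s \<Longrightarrow> s \<le> t \<Longrightarrow> t \<le> T \<Longrightarrow> E n t \<le> E n s"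
  using dyn(3)[OF spec[OF Npos, of n] al spec[OF ps, of n] bnd'] unfolding E_def by blast

lemma dynF: "0 \<le> s \<Longrightarrow> s \<le> t \<Longrightarrow> t \<le> T \<Longrightarrow>
   \<bar>F w p n t - F w p n s\<bar> \<le> C0 w * (t - s) + C1 w * (E n s - E n t)"
proof -
  assume st: "0 \<le> s" "s \<le> t" "t \<le> T"
  obtain k l where w: "w = (k, l)" by (cases w)
  show ?thesis
    using dyn(4)[OF spec[OF Npos, of n] al spec[OF ps, of n] bnd' st, of k l p]
    unfolding E_def F_def C0_def C1_def w by simp
qed

lemma contF: "continuous_on {0..T} (F w p n)"
proof -
  obtain k l where w: "w = (k, l)" by (cases w)
  show ?thesis
    using dyn(2)[OF spec[OF Npos, of n] al spec[OF ps, of n] bnd', of k l p]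
    unfolding F_def w by simp
qed

lemma F_bound: "\<bar>F w p n t\<bar> \<le> 1"
proof -
  have "\<bar>\<Sum>i<N n. cos (w \<bullet> (x n i t, v n i t) + p)\<bar> \<le> (\<Sum>i<N n. 1)"
    by (rule order_trans[OF sum_abs sum_mono]) auto
  then show ?thesis using Npos unfolding F_def by (simp add: divide_le_eq_1 abs_div)
qed

lemma weak_chi:
  assumes "continuous_on UNIV ch" "bounded (range ch)"
  shows "(\<lambda>t. ch t * Q w p t) \<in> borel_measurable (restrict_space lborel {0..T}) \<and>
         (\<lambda>n. set_lebesgue_integral lborel {0..T} (\<lambda>t. ch t * F w p n t))
          \<longlonglongrightarrow> set_lebesgue_integral lborel {0..T} (\<lambda>t. ch t * Q w p t)"
proof -
  define g where "g = (\<lambda>y. ch (fst y) * cos (w \<bullet> snd y + p))"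
  obtain B where B: "\<And>t. \<bar>ch t\<bar> \<le> B" using assms(2) unfolding bounded_iff by auto
  have c1: "continuous_on ({0..T} \<times> UNIV) g"
  proof -
    have "continuous_on UNIV (\<lambda>y::real \<times> ('a \<times> 'a). ch (fst y))"
      by (rule continuous_on_compose2[OF assms(1) continuous_on_fst[OF continuous_on_id]]) auto
    moreover have "continuous_on UNIV (\<lambda>y::real \<times> ('a \<times> 'a). cos (w \<bullet> snd y + p))"
      by (intro continuous_intros)
    ultimately show ?thesis unfolding g_def
      by (rule continuous_on_subset[OF continuous_on_mult subset_UNIV])
  qed
  have b1: "bounded (g ` ({0..T} \<times> UNIV))"
    unfolding bounded_iff g_def
  proof (intro exI[of _ B] ballI)
    fix y assume "y \<in> (\<lambda>y. ch (fst y) * cos (w \<bullet> snd y + p)) ` ({0..T} \<times> UNIV)"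
    then obtain t z where y: "y = ch t * cos (w \<bullet> z + p)" by auto
    have "\<bar>ch t * cos (w \<bullet> z + p)\<bar> \<le> B * 1"
      unfolding abs_mult by (intro mult_mono B) (auto intro: order_trans[OF abs_ge_zero B])
    then show "norm y \<le> B" using y by simp
  qed
  have W: "(\<lambda>t. \<integral>z. g (t, z) \<partial>\<mu> t) \<in> borel_measurable (restrict_space lborel {0..T}) \<and> (\<lambda>n. set_lebesgue_integral lborel {0..T}
                    (\<lambda>t. (\<Sum>i<N n. g (t, (x n i t, v n i t))) / real (N n)))
               \<longlonglongrightarrow> set_lebesgue_integral lborel {0..T} (\<lambda>t. \<integral>z. g (t, z) \<partial>\<mu> t)"
    by (rule weak[rule_format, OF conjI[OF c1 b1]])
  have e1: "(\<lambda>t. (\<Sum>i<N n. g (t, (x n i t, v n i t))) / real (N n)) = (\<lambda>t. ch t * F w p n t)" for n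
    by (simp add: g_def F_def sum_distrib_left fun_eq_iff)
  have e2: "(\<lambda>t. \<integral>z. g (t, z) \<partial>\<mu> t) = (\<lambda>t. ch t * Q w p t)"
    by (simp add: g_def Q_def fun_eq_iff)
  show ?thesis using W unfolding e1 e2 .
qed

end



lemma AE0:
  fixes h :: "real \<Rightarrow> real"
  assumes hm: "h \<in> borel_measurable (restrict_space lborel {a..b})"
    and nn: "\<And>t. t \<in> {a..b} \<Longrightarrow> 0 \<le> h t" and hb: "\<And>t. t \<in> {a..b} \<Longrightarrow> h t \<le> B"
    and i0: "set_lebesgue_integral lborel {a..b} h = 0"
  shows "AE t in lborel. t \<in> {a..b} \<longrightarrow> h t = 0"
proof -
  define f where "f t = indicator {a..b} t * h t" for t
  have fm: "f \<in> borel_measurable lborel"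
    using hm unfolding f_def by (subst (asm) borel_measurable_restrict_space_iff) auto
  have intB: "integrable lborel (\<lambda>t. indicator {a..b} t * B)"
    by (intro integrable_mult_left integrable_real_indicator) (auto simp: emeasure_lborel_Icc_eq)
  have fb: "norm (f t) \<le> norm (indicator {a..b} t * B)" for t
  proof (cases "t \<in> {a..b}")
    case True
    then show ?thesis using nn[OF True] hb[OF True] by (simp add: f_def)
  qed (simp add: f_def)
  have fi: "integrable lborel f"
    by (rule Bochner_Integration.integrable_bound[OF intB fm]) (rule AE_I2, use fb in simp)
  have "integral\<^sup>L lborel f = 0" using i0 unfolding set_lebesgue_integral_def f_def by simp
  then have "AE t in lborel. f t = 0"
    using integral_nonneg_eq_0_iff_AE[OF fi] nn by (auto simp: f_def indicator_def intro!: AE_I2)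
  then show ?thesis by eventually_elim (auto simp: f_def)
qed

context CS begin

lemma Q_meas: "Q w p \<in> borel_measurable (restrict_space lborel {0..T})"
proof -
  have "bounded (range (\<lambda>_::real. 1::real))" by simp
  from conjunct1[OF weak_chi[OF continuous_on_const this, of w p]] show ?thesis by simp
qed

lemma Q_bound: "t \<in> {0..T} \<Longrightarrow> \<bar>Q w p t\<bar> \<le> 1"
proof -
  assume t: "t \<in> {0..T}"
  interpret P: prob_space "\<mu> t" using prob[OF t] .
  have m: "(\<lambda>z. cos (w \<bullet> z + p)) \<in> borel_measurable (\<mu> t)"
  proof -
    have "(\<lambda>z. cos (w \<bullet> z + p)) \<in> borel_measurable borel"
      by (intro borel_measurable_continuous_onI continuous_intros)
    then show ?thesis unfolding measurable_cong_sets[OF sets_mu[OF t] refl] .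
  qed
  have i: "integrable (\<mu> t) (\<lambda>z. cos (w \<bullet> z + p))"
    by (rule P.integrable_const_bound[where B=1]) (use m in auto)
  have "Q w p t \<le> 1" unfolding Q_def by (rule P.integral_le_const[OF i]) auto
  moreover have "- Q w p t \<le> 1" unfolding Q_def
    using P.integral_le_const[OF integrable_minus[OF i], of 1] by auto
  ultimately show ?thesis by auto
qed

lemma meas_mu: "f \<in> borel_measurable borel \<Longrightarrow> t \<in> {0..T} \<Longrightarrow> f \<in> borel_measurable (\<mu> t)"
  using measurable_cong_sets[OF sets_mu refl] by blast

lemma supp: "AE t in lborel. t \<in> {0..T} \<longrightarrow> (AE z in \<mu> t. norm z \<le> R)"
proof -
  define g where "g = (\<lambda>y::real \<times> ('a \<times> 'a). min 1 (max 0 (norm (snd y) - R)))"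
  have c1: "continuous_on ({0..T} \<times> UNIV) g"
    unfolding g_def by (intro continuous_intros)
  have b1: "bounded (g ` ({0..T} \<times> UNIV))"
    unfolding bounded_iff g_def by (intro exI[of _ 1]) auto
  note W = weak[rule_format, OF conjI[OF c1 b1]]
  define h where "h t = (\<integral>z. g (t, z) \<partial>\<mu> t)" for t
  have z0: "(\<Sum>i<N n. g (t, (x n i t, v n i t))) / real (N n) = 0" if t: "t \<in> {0..T}" for n t
  proof -
    have "g (t, (x n i t, v n i t)) = 0" if "i < N n" for i
    proof -
      have "norm (x n i t, v n i t) \<le> norm (x n i t) + norm (v n i t)" by (rule norm_Pair_le)
      also have "\<dots> \<le> R" using bnd'[OF that t] unfolding R_def by auto
      finally show ?thesis unfolding g_def by simp
    qed
    then show ?thesis by simp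
  qed
  have "(\<lambda>n. set_lebesgue_integral lborel {0..T} (\<lambda>t. (\<Sum>i<N n. g (t, (x n i t, v n i t))) / real (N n))) = (\<lambda>n. 0)"
    by (rule ext, subst set_lebesgue_integral_cong[where g="\<lambda>_. 0"]) (auto simp: z0 set_lebesgue_integral_def)
  then have hi: "set_lebesgue_integral lborel {0..T} h = 0"
    using conjunct2[OF W] unfolding h_def by (simp only: LIMSEQ_const_iff)
  have hnn: "0 \<le> h t" "h t \<le> 1" if t: "t \<in> {0..T}" for t
  proof -
    interpret P: prob_space "\<mu> t" using prob[OF t] .
    have m: "(\<lambda>z. g (t, z)) \<in> borel_measurable (\<mu> t)"
      by (intro meas_mu t) (simp add: g_def)
    have i: "integrable (\<mu> t) (\<lambda>z. g (t, z))"
      by (rule P.integrable_const_bound[where B=1]) (use m in \<open>auto simp: g_def\<close>)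
    show "0 \<le> h t" unfolding h_def by (rule Bochner_Integration.integral_nonneg) (simp add: g_def)
    show "h t \<le> 1" unfolding h_def by (rule P.integral_le_const[OF i]) (simp add: g_def)
  qed
  have "AE t in lborel. t \<in> {0..T} \<longrightarrow> h t = 0"
  proof (rule AE0[OF _ hnn hi])
    show "h \<in> borel_measurable (restrict_space lborel {0..T})"
      using conjunct1[OF W] unfolding h_def .
  qed auto
  then show ?thesis
  proof eventually_elim
    case (elim t)
    show ?case
    proof
      assume t: "t \<in> {0..T}"
      interpret P: prob_space "\<mu> t" using prob[OF t] .
      have m: "(\<lambda>z. g (t, z)) \<in> borel_measurable (\<mu> t)"
        by (intro meas_mu t) (simp add: g_def)
      have i: "integrable (\<mu> t) (\<lambda>z. g (t, z))"
        by (rule P.integrable_const_bound[where B=1]) (use m in \<open>auto simp: g_def\<close>)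
      have "AE z in \<mu> t. g (t, z) = 0"
        using integral_nonneg_eq_0_iff_AE[OF i] elim t unfolding h_def by (simp add: g_def)
      then show "AE z in \<mu> t. norm z \<le> R"
        by eventually_elim (simp add: g_def)
    qed
  qed
qed

end



context CS begin

definition "SE = {t\<in>{0..T}. (\<lambda>n. E n t) \<longlonglongrightarrow> e t}"
definition "Dc = {t\<in>SE. \<not> continuous (at t within SE) e}"

lemma SE_AE: "AE t in lborel. t \<in> {0..T} \<longrightarrow> t \<in> SE"
  using energy unfolding SE_def E_def e_def by simp

lemma e_mono: "s \<in> SE \<Longrightarrow> t \<in> SE \<Longrightarrow> s \<le> t \<Longrightarrow> e t \<le> e s"
  unfolding SE_def by (auto intro!: LIMSEQ_le[of "\<lambda>n. E n t" _ "\<lambda>n. E n s"] dynE)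

lemma Dc_countable: "countable Dc"
proof -
  have "mono_on SE (\<lambda>t. - e t)" by (auto simp: mono_on_def intro: e_mono)
  from mono_on_ctble_discont[OF this] have "countable {a\<in>SE. \<not> continuous (at a within SE) (\<lambda>t. - e t)}" .
  moreover have "continuous (at a within SE) (\<lambda>t. - e t) \<longleftrightarrow> continuous (at a within SE) e" for a
    using continuous_minus[of "at a within SE" e] continuous_minus[of "at a within SE" "\<lambda>t. - e t"] by auto
  ultimately show ?thesis unfolding Dc_def by simp
qed

lemma SE_dense: "0 \<le> c \<Longrightarrow> c < d \<Longrightarrow> d \<le> T \<Longrightarrow> \<exists>a\<in>SE. c < a \<and> a < d"
proof (rule ccontr)
  assume cd: "0 \<le> c" "c < d" "d \<le> T" and "\<not> (\<exists>a\<in>SE. c < a \<and> a < d)"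
  then have sub: "{c<..<d} \<subseteq> {t. \<not> (t \<in> {0..T} \<longrightarrow> t \<in> SE)}" by auto
  from SE_AE obtain N0 where N0: "{t \<in> space lborel. \<not> (t \<in> {0..T} \<longrightarrow> t \<in> SE)} \<subseteq> N0"
    "emeasure lborel N0 = 0" "N0 \<in> sets lborel" by (rule AE_E)
  have "emeasure lborel {c<..<d} \<le> emeasure lborel N0"
    using sub N0 by (intro emeasure_mono) auto
  then show False using N0 cd by simp
qed

lemma tent_pos:
  fixes ch :: "real \<Rightarrow> real"
  assumes "continuous_on {0..T} ch" "\<And>u. 0 \<le> ch u" "t \<in> {0..T}" "ch t > 0"
  shows "integral {0..T} ch > 0"
proof -
  have "integral {0..T} ch \<noteq> 0"
    using integral_eq_0_iff[OF assms(1) Tpos] assms by force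
  moreover have "integral {0..T} ch \<ge> 0"
    by (rule integral_nonneg[OF integrable_continuous_interval[OF assms(1)]]) (use assms in auto)
  ultimately show ?thesis by simp
qed

lemma weak_HK:
  assumes "continuous_on UNIV ch" "bounded (range ch)"
  shows "(\<lambda>n. integral {0..T} (\<lambda>t. ch t * F w p n t))
          \<longlonglongrightarrow> set_lebesgue_integral lborel {0..T} (\<lambda>t. ch t * Q w p t)"
proof -
  have "continuous_on {0..T} (\<lambda>t. ch t * F w p n t)" for n
    by (intro continuous_on_mult contF continuous_on_subset[OF assms(1)]) auto
  then have "set_lebesgue_integral lborel {0..T} (\<lambda>t. ch t * F w p n t) = integral {0..T} (\<lambda>t. ch t * F w p n t)" for n
    by (intro set_borel_integral_eq_integral(2) borel_integrable_atLeastAtMost')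
  then show ?thesis using conjunct2[OF weak_chi[OF assms, of w p]] by simp
qed

lemma conv:
  assumes t: "t \<in> SE" "t \<notin> Dc" "0 < t" "t < T"
  shows "convergent (\<lambda>n. F w p n t)"
proof (rule Cauchy_convergent, rule metric_CauchyI)
  fix \<epsilon> :: real assume \<epsilon>: "\<epsilon> > 0"
  define A0 where "A0 = C0 w" define A1 where "A1 = C1 w"
  have A: "0 \<le> A0" "0 \<le> A1" unfolding A0_def A1_def by (rule C_nonneg)+
  have ce: "continuous (at t within SE) e" using t unfolding Dc_def by auto
  define \<eta> where "\<eta> = \<epsilon> / (16 * (A1 + 1))"
  have \<eta>: "\<eta> > 0" using \<epsilon> A unfolding \<eta>_def by auto
  from ce[unfolded continuous_within_eps_delta, rule_format, OF \<eta>] obtain \<delta> where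
    \<delta>0: "\<delta> > 0" and \<delta>1: "\<forall>u\<in>SE. dist u t < \<delta> \<longrightarrow> dist (e u) (e t) < \<eta>" by blast
  have \<delta>: "\<delta> > 0" "\<And>u. u \<in> SE \<Longrightarrow> dist u t < \<delta> \<Longrightarrow> dist (e u) (e t) < \<eta>"
    using \<delta>0 \<delta>1 by auto
  define r0 where "r0 = min (min \<delta> (\<epsilon> / (16 * (A0 + 1)))) (min t (T - t))"
  have r0: "r0 > 0" "r0 \<le> \<delta>" "r0 \<le> \<epsilon> / (16 * (A0 + 1))" "r0 \<le> t" "r0 \<le> T - t"
    using \<delta> \<epsilon> A t unfolding r0_def by auto
  obtain a where a: "a \<in> SE" "t - r0 < a" "a < t" using SE_dense[of "t - r0" t] r0 t by auto
  obtain b where b: "b \<in> SE" "t < b" "b < t + r0" using SE_dense[of t "t + r0"] r0 t by auto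
  have eab: "e a - e b < 2 * \<eta>"
  proof -
    have "dist (e a) (e t) < \<eta>" using \<delta>(2)[OF a(1)] a r0 by (simp add: dist_real_def)
    moreover have "dist (e b) (e t) < \<eta>" using \<delta>(2)[OF b(1)] b r0 by (simp add: dist_real_def)
    ultimately show ?thesis by (simp add: dist_real_def)
  qed
  define r1 where "r1 = min (t - a) (b - t)"
  have r1: "r1 > 0" "r1 \<le> t - a" "r1 \<le> b - t" using a b unfolding r1_def by auto
  define ch where "ch u = max 0 (r1 - \<bar>u - t\<bar>)" for u
  have chc: "continuous_on UNIV ch" unfolding ch_def by (intro continuous_intros)
  have chb: "bounded (range ch)" unfolding bounded_iff ch_def using r1 by (intro exI[of _ r1]) auto
  have ch0: "0 \<le> ch u" for u by (simp add: ch_def)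
  define c where "c = integral {0..T} ch"
  have c: "c > 0" unfolding c_def
    by (rule tent_pos[OF continuous_on_subset[OF chc subset_UNIV] ch0, of t]) (use t r1 in \<open>auto simp: ch_def\<close>)
  define I where "I = set_lebesgue_integral lborel {0..T} (\<lambda>t. ch t * Q w p t)"
  define In where "In n = integral {0..T} (\<lambda>u. ch u * F w p n u)" for n
  have In: "In \<longlonglongrightarrow> I" unfolding In_def I_def by (rule weak_HK[OF chc chb])
  have key: "\<bar>In n - c * F w p n t\<bar> \<le> c * (2 * r0 * A0 + A1 * (E n a - E n b))" for n
  proof -
    define Bn where "Bn = 2 * r0 * A0 + A1 * (E n a - E n b)"
    have pt: "\<bar>ch u * F w p n u - ch u * F w p n t\<bar> \<le> ch u * Bn" if u: "u \<in> {0..T}" for u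
    proof (cases "ch u = 0")
      case True then show ?thesis by simp
    next
      case False
      then have ut: "\<bar>u - t\<bar> < r1" by (auto simp: ch_def max_def split: if_splits)
      then have au: "a < u" "u < b" using r1 by auto
      have "\<bar>F w p n u - F w p n t\<bar> \<le> Bn"
      proof (cases "u \<le> t")
        case True
        have "\<bar>F w p n t - F w p n u\<bar> \<le> C0 w * (t - u) + C1 w * (E n u - E n t)"
          by (rule dynF) (use True u t in auto)
        moreover have "E n u \<le> E n a" by (rule dynE) (use au u a r0 t in auto)
        moreover have "E n b \<le> E n t" by (rule dynE) (use b r0 t in auto)
        moreover have "t - u \<le> 2 * r0" using au a by auto
        ultimately have "A0 * (t - u) \<le> A0 * (2 * r0)" "A1 * (E n u - E n t) \<le> A1 * (E n a - E n b)"
          "\<bar>F w p n t - F w p n u\<bar> \<le> A0 * (t - u) + A1 * (E n u - E n t)"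
          using A by (auto intro!: mult_left_mono simp: A0_def A1_def)
        then show ?thesis unfolding Bn_def by (simp add: abs_minus_commute mult.commute[of _ A0] mult.assoc)
      next
        case False
        have "\<bar>F w p n u - F w p n t\<bar> \<le> C0 w * (u - t) + C1 w * (E n t - E n u)"
          by (rule dynF) (use False u t in auto)
        moreover have "E n t \<le> E n a" by (rule dynE) (use a r0 t in auto)
        moreover have "E n b \<le> E n u" by (rule dynE) (use au u b r0 t in auto)
        moreover have "u - t \<le> 2 * r0" using au b by auto
        ultimately have "A0 * (u - t) \<le> A0 * (2 * r0)" "A1 * (E n t - E n u) \<le> A1 * (E n a - E n b)"
          "\<bar>F w p n u - F w p n t\<bar> \<le> A0 * (u - t) + A1 * (E n t - E n u)"
          using A by (auto intro!: mult_left_mono simp: A0_def A1_def)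
        then show ?thesis unfolding Bn_def by (simp add: mult.commute[of _ A0] mult.assoc)
      qed
      then show ?thesis using ch0[of u] by (simp add: abs_mult right_diff_distrib[symmetric] mult_left_mono)
    qed
    have i1: "(\<lambda>u. ch u * F w p n u) integrable_on {0..T}"
      by (intro integrable_continuous_interval continuous_on_mult contF continuous_on_subset[OF chc]) auto
    have i2: "(\<lambda>u. ch u * F w p n t) integrable_on {0..T}"
      by (intro integrable_continuous_interval continuous_on_mult continuous_on_const continuous_on_subset[OF chc]) auto
    have i3: "(\<lambda>u. ch u * Bn) integrable_on {0..T}"
      by (intro integrable_continuous_interval continuous_on_mult continuous_on_const continuous_on_subset[OF chc]) auto
    have "In n - c * F w p n t = integral {0..T} (\<lambda>u. ch u * F w p n u - ch u * F w p n t)"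
      unfolding In_def c_def by (simp add: Henstock_Kurzweil_Integration.integral_diff[OF i1 i2])
    also have "\<bar>\<dots>\<bar> \<le> integral {0..T} (\<lambda>u. ch u * Bn)"
      using integral_norm_bound_integral[OF integrable_diff[OF i1 i2] i3] pt by simp
    also have "\<dots> = c * Bn" unfolding c_def by simp
    finally show ?thesis unfolding Bn_def .
  qed
  have Eab: "(\<lambda>n. E n a - E n b) \<longlonglongrightarrow> e a - e b"
    using a(1) b(1) unfolding SE_def by (auto intro!: tendsto_diff)
  have ev1: "eventually (\<lambda>n. dist (In n) I < c * \<epsilon> / 8) sequentially"
    by (rule tendstoD[OF In]) (use c \<epsilon> in simp)
  have ev2: "eventually (\<lambda>n. dist (E n a - E n b) (e a - e b) < \<eta>) sequentially"
    by (rule tendstoD[OF Eab \<eta>])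
  obtain K where K: "\<And>n. n \<ge> K \<Longrightarrow> dist (In n) I < c * \<epsilon> / 8 \<and> dist (E n a - E n b) (e a - e b) < \<eta>"
    using eventually_conj[OF ev1 ev2] unfolding eventually_sequentially by blast
  have close: "\<bar>F w p n t - I / c\<bar> < 7 * \<epsilon> / 16" if n: "n \<ge> K" for n
  proof -
    have Ed: "E n a - E n b < 3 * \<eta>" using K[OF n] eab by (simp add: dist_real_def abs_less_iff)
    have t1: "2 * r0 * A0 \<le> \<epsilon> / 8"
    proof -
      have "2 * r0 * A0 \<le> 2 * (\<epsilon> / (16 * (A0 + 1))) * A0" using r0 A by (intro mult_right_mono) auto
      also have "\<dots> = (\<epsilon> / 8) * (A0 / (A0 + 1))" using A by (simp add: field_simps)
      also have "\<dots> \<le> \<epsilon> / 8" using A \<epsilon> by (intro mult_left_le) auto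
      finally show ?thesis .
    qed
    have t2: "A1 * (E n a - E n b) \<le> 3 * \<epsilon> / 16"
    proof -
      have "A1 * (E n a - E n b) \<le> A1 * (3 * \<eta>)" using Ed A by (intro mult_left_mono) auto
      also have "\<dots> = (3 * \<epsilon> / 16) * (A1 / (A1 + 1))" using A unfolding \<eta>_def by (simp add: field_simps)
      also have "\<dots> \<le> 3 * \<epsilon> / 16" using A \<epsilon> by (intro mult_left_le) auto
      finally show ?thesis .
    qed
    have "\<bar>c * F w p n t - I\<bar> \<le> \<bar>In n - c * F w p n t\<bar> + \<bar>In n - I\<bar>" by linarith
    also have "\<dots> < c * (2 * r0 * A0 + A1 * (E n a - E n b)) + c * \<epsilon> / 8"
      using key[of n] K[OF n] by (simp add: dist_real_def)
    also have "\<dots> \<le> c * (\<epsilon> / 8 + 3 * \<epsilon> / 16) + c * \<epsilon> / 8"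
      using t1 t2 c by (intro add_right_mono mult_left_mono) auto
    also have "\<dots> = c * (7 * \<epsilon> / 16)" by (simp add: field_simps)
    finally have "\<bar>c * F w p n t - I\<bar> < c * (7 * \<epsilon> / 16)" .
    moreover have "\<bar>c * F w p n t - I\<bar> = c * \<bar>F w p n t - I / c\<bar>"
      using c by (simp add: field_simps abs_mult[symmetric])
    ultimately show ?thesis using c by simp
  qed
  show "\<exists>K. \<forall>m\<ge>K. \<forall>n\<ge>K. dist (F w p m t) (F w p n t) < \<epsilon>"
  proof (intro exI allI impI)
    fix m n assume "K \<le> m" "K \<le> n"
    from close[OF this(1)] close[OF this(2)] show "dist (F w p m t) (F w p n t) < \<epsilon>"
      unfolding dist_real_def abs_less_iff by linarith
  qed
qed

end



lemma si_bound:
  fixes f :: "real \<Rightarrow> real"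
  assumes fm: "f \<in> borel_measurable (restrict_space lborel {a..b})" and fb: "\<And>t. t \<in> {a..b} \<Longrightarrow> \<bar>f t\<bar> \<le> B"
  shows "set_integrable lborel {a..b} f"
proof -
  have m: "(\<lambda>t. indicator {a..b} t *\<^sub>R f t) \<in> borel_measurable lborel"
    using fm by (subst (asm) borel_measurable_restrict_space_iff) auto
  have intB: "integrable lborel (\<lambda>t. indicator {a..b} t * B)"
    by (intro integrable_mult_left integrable_real_indicator) (auto simp: emeasure_lborel_Icc_eq)
  have b: "norm (indicator {a..b} t *\<^sub>R f t) \<le> norm (indicator {a..b} t * B)" for t
  proof (cases "t \<in> {a..b}")
    case True then show ?thesis using fb[OF True] by simp
  qed simp
  show ?thesis unfolding set_integrable_def
    by (rule Bochner_Integration.integrable_bound[OF intB m]) (rule AE_I2, rule b)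
qed

lemma cont_meas_r: "continuous_on {a..b} (f :: real \<Rightarrow> real) \<Longrightarrow> f \<in> borel_measurable (restrict_space lborel {a..b})"
  using borel_measurable_continuous_on_restrict[of "{a..b}" f]
  unfolding measurable_cong_sets[OF sets_restrict_space_cong[OF sets_lborel] refl] .

lemma cont_meas_r2: "continuous_on UNIV (f :: real \<Rightarrow> real) \<Longrightarrow> f \<in> borel_measurable (restrict_space lborel {a..b})"
  by (rule cont_meas_r, erule continuous_on_subset) auto

lemma abs_mult_le1: "\<bar>a\<bar> \<le> B \<Longrightarrow> \<bar>b\<bar> \<le> 1 \<Longrightarrow> \<bar>a * (b::real)\<bar> \<le> B"
proof -
  assume "\<bar>a\<bar> \<le> B" "\<bar>b\<bar> \<le> 1"
  then have "\<bar>a\<bar> * \<bar>b\<bar> \<le> \<bar>a\<bar>" by (intro mult_left_le) auto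
  then show ?thesis using \<open>\<bar>a\<bar> \<le> B\<close> by (simp add: abs_mult)
qed

context CS begin

definition "Lc w p t = max (-1) (min 1 (lim (\<lambda>n. F w p n t)))"

definition "good t \<longleftrightarrow> t \<in> SE \<and> t \<notin> Dc \<and> 0 < t \<and> t < T"

lemma good_AE: "AE t in lborel. t \<in> {0..T} \<longrightarrow> good t"
proof -
  have "Dc \<union> {0, T} \<in> null_sets lborel"
    by (intro countable_imp_null_set_lborel countable_Un Dc_countable) auto
  from AE_not_in[OF this] SE_AE show ?thesis
    by eventually_elim (auto simp: good_def)
qed

lemma Lc_lim: "good t \<Longrightarrow> (\<lambda>n. F w p n t) \<longlonglongrightarrow> Lc w p t"
proof -
  assume g: "good t"
  have c: "(\<lambda>n. F w p n t) \<longlonglongrightarrow> lim (\<lambda>n. F w p n t)"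
    using conv[of t w p] g unfolding good_def convergent_LIMSEQ_iff by auto
  have "lim (\<lambda>n. F w p n t) \<le> 1"
    by (rule LIMSEQ_le_const2[OF c]) (use F_bound[of w p _ t] in \<open>auto simp: abs_le_iff\<close>)
  moreover have "-1 \<le> lim (\<lambda>n. F w p n t)"
    by (rule LIMSEQ_le_const[OF c]) (use F_bound[of w p _ t] in \<open>auto simp: abs_le_iff\<close>)
  ultimately show ?thesis using c unfolding Lc_def by simp
qed

lemma Lc_meas: "Lc w p \<in> borel_measurable (restrict_space lborel {0..T})"
proof -
  have "F w p n \<in> borel_measurable (restrict_space lborel {0..T})" for n
    by (rule cont_meas_r[OF contF])
  then have "(\<lambda>t. lim (\<lambda>n. F w p n t)) \<in> borel_measurable (restrict_space lborel {0..T})"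
    by (rule borel_measurable_lim_metric)
  then show ?thesis unfolding Lc_def by measurable
qed

lemma Lc_bound: "\<bar>Lc w p t\<bar> \<le> 1"
  unfolding Lc_def by auto

lemma ident: "AE t in lborel. t \<in> {0..T} \<longrightarrow> Lc w p t = Q w p t"
proof -
  have "AE t in lborel. t \<in> {0..T} \<longrightarrow> Lc w p t - Q w p t = 0"
  proof (rule FL)
    show "(\<lambda>t. Lc w p t - Q w p t) \<in> borel_measurable (restrict_space lborel {0..T})"
      using Lc_meas Q_meas by measurable
    show "\<bar>Lc w p t - Q w p t\<bar> \<le> 2" if "t \<in> {0..T}" for t
      using Lc_bound[of w p t] Q_bound[OF that, of w p] by linarith
    fix ch :: "real \<Rightarrow> real" assume chc: "continuous_on UNIV ch" and chb: "bounded (range ch)"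
    obtain B where B: "\<And>t. \<bar>ch t\<bar> \<le> B" using chb unfolding bounded_iff by auto
    have chm: "ch \<in> borel_measurable (restrict_space lborel {0..T})" by (rule cont_meas_r2[OF chc])
    have i1: "set_integrable lborel {0..T} (\<lambda>t. ch t * Lc w p t)"
    proof (rule si_bound)
      show "(\<lambda>t. ch t * Lc w p t) \<in> borel_measurable (restrict_space lborel {0..T})"
        using chm Lc_meas by measurable
      show "\<bar>ch t * Lc w p t\<bar> \<le> B" for t
        using B[of t] Lc_bound[of w p t] by (rule abs_mult_le1)
    qed
    have i2: "set_integrable lborel {0..T} (\<lambda>t. ch t * Q w p t)"
    proof (rule si_bound)
      show "(\<lambda>t. ch t * Q w p t) \<in> borel_measurable (restrict_space lborel {0..T})"
        using chm Q_meas by measurable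
      show "\<bar>ch t * Q w p t\<bar> \<le> B" if "t \<in> {0..T}" for t
        using B[of t] Q_bound[OF that, of w p] by (rule abs_mult_le1)
    qed
    have lim1: "(\<lambda>n. set_lebesgue_integral lborel {0..T} (\<lambda>t. ch t * F w p n t))
        \<longlonglongrightarrow> set_lebesgue_integral lborel {0..T} (\<lambda>t. ch t * Lc w p t)"
      unfolding set_lebesgue_integral_def
    proof (rule integral_dominated_convergence[where w="\<lambda>t. indicator {0..T} t * B"])
      show "integrable lborel (\<lambda>t. indicator {0..T} t * B)"
        by (intro integrable_mult_left integrable_real_indicator) (auto simp: emeasure_lborel_Icc_eq)
      show "(\<lambda>t. indicator {0..T} t *\<^sub>R (ch t * Lc w p t)) \<in> borel_measurable lborel"
        using i1 unfolding set_integrable_def by auto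
      show "(\<lambda>t. indicator {0..T} t *\<^sub>R (ch t * F w p n t)) \<in> borel_measurable lborel" for n
      proof -
        have "(\<lambda>t. ch t * F w p n t) \<in> borel_measurable (restrict_space lborel {0..T})"
          using chm cont_meas_r[OF contF, of w p n] by measurable
        then show ?thesis by (subst (asm) borel_measurable_restrict_space_iff) auto
      qed
      show "AE t in lborel. norm (indicator {0..T} t *\<^sub>R (ch t * F w p n t)) \<le> indicator {0..T} t * B" for n
      proof (rule AE_I2)
        fix t show "norm (indicator {0..T} t *\<^sub>R (ch t * F w p n t)) \<le> indicator {0..T} t * B"
          using abs_mult_le1[OF B[of t] F_bound[of w p n t]] by (auto simp: indicator_def)
      qed
      show "AE t in lborel. (\<lambda>n. indicator {0..T} t *\<^sub>R (ch t * F w p n t)) \<longlonglongrightarrow> indicator {0..T} t *\<^sub>R (ch t * Lc w p t)"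
        using good_AE
      proof eventually_elim
        case (elim t)
        show ?case
        proof (cases "t \<in> {0..T}")
          case True
          then show ?thesis using Lc_lim[of t w p] elim by (auto intro!: tendsto_mult)
        qed simp
      qed
    qed
    have "set_lebesgue_integral lborel {0..T} (\<lambda>t. ch t * Lc w p t) = set_lebesgue_integral lborel {0..T} (\<lambda>t. ch t * Q w p t)"
      using LIMSEQ_unique[OF lim1 conjunct2[OF weak_chi[OF chc chb, of w p]]] .
    then show "set_lebesgue_integral lborel {0..T} (\<lambda>t. ch t * (Lc w p t - Q w p t)) = 0"
      using set_integral_diff(2)[OF i1 i2] by (simp add: right_diff_distrib)
  qed
  then show ?thesis by simp
qed

end



lemma int_close:
  fixes f g :: "'b \<Rightarrow> real"
  assumes P: "prob_space M" and fi: "integrable M f" and gi: "integrable M g"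
    and c: "AE z in M. \<bar>f z - g z\<bar> \<le> c"
  shows "\<bar>(\<integral>z. f z \<partial>M) - (\<integral>z. g z \<partial>M)\<bar> \<le> c"
proof -
  interpret prob_space M by (rule P)
  have "(\<integral>z. f z \<partial>M) - (\<integral>z. g z \<partial>M) = (\<integral>z. f z - g z \<partial>M)" using fi gi by simp
  moreover have "(\<integral>z. f z - g z \<partial>M) \<le> c"
    by (rule integral_le_const) (use fi gi c in auto)
  moreover have "(\<integral>z. g z - f z \<partial>M) \<le> c"
    by (rule integral_le_const) (use fi gi c in auto)
  moreover have "(\<integral>z. g z - f z \<partial>M) = - (\<integral>z. f z - g z \<partial>M)" using fi gi by simp
  ultimately show ?thesis by linarith
qed

lemma transport_inner_bound:
  fixes w w' z :: "'a::euclidean_space \<times> 'a"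
  shows "\<bar>w \<bullet> transport t0 s z - w' \<bullet> z\<bar> \<le> norm w * \<bar>s - t0\<bar> * norm z + norm (w - w') * norm z"
proof -
  have d: "transport t0 s z - z = (- ((s - t0) *\<^sub>R snd z), 0)"
    by (simp add: transport_def prod_eq_iff)
  have nd: "norm (transport t0 s z - z) \<le> \<bar>s - t0\<bar> * norm z"
    unfolding d using norm_snd_le[of "snd z" "fst z"] by (simp add: mult_left_mono)
  have "w \<bullet> transport t0 s z - w' \<bullet> z = w \<bullet> (transport t0 s z - z) + (w - w') \<bullet> z"
    by (simp add: inner_diff_right inner_diff_left)
  moreover have "\<bar>w \<bullet> (transport t0 s z - z)\<bar> \<le> norm w * norm (transport t0 s z - z)"
    by (rule Cauchy_Schwarz_ineq2)
  moreover have "\<bar>(w - w') \<bullet> z\<bar> \<le> norm (w - w') * norm z"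
    by (rule Cauchy_Schwarz_ineq2)
  ultimately have "\<bar>w \<bullet> transport t0 s z - w' \<bullet> z\<bar> \<le> norm w * norm (transport t0 s z - z) + norm (w - w') * norm z"
    by linarith
  also have "\<dots> \<le> norm w * (\<bar>s - t0\<bar> * norm z) + norm (w - w') * norm z"
    using nd by (intro add_right_mono mult_left_mono) auto
  finally show ?thesis by (simp add: mult.assoc)
qed

lemma transport_same: "transport t t z = z"
  by (simp add: transport_def)

context CS begin

lemma Lc_diff:
  assumes "good s" "good t" "s \<le> t"
  shows "\<bar>Lc w p t - Lc w p s\<bar> \<le> C0 w * (t - s) + C1 w * (e s - e t)"
proof (rule LIMSEQ_le[OF tendsto_rabs[OF tendsto_diff[OF Lc_lim[OF assms(2)] Lc_lim[OF assms(1)]]]])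
  show "(\<lambda>n. C0 w * (t - s) + C1 w * (E n s - E n t)) \<longlonglongrightarrow> C0 w * (t - s) + C1 w * (e s - e t)"
    using assms unfolding good_def SE_def by (auto intro!: tendsto_intros)
  show "\<exists>N. \<forall>n\<ge>N. \<bar>F w p n t - F w p n s\<bar> \<le> C0 w * (t - s) + C1 w * (E n s - E n t)"
    using assms unfolding good_def by (auto intro!: dynF)
qed

lemma cos_integrable: "t \<in> {0..T} \<Longrightarrow> integrable (\<mu> t) (\<lambda>z. cos (w \<bullet> f z + p))"
  if "continuous_on UNIV f" for f :: "'a \<times> 'a \<Rightarrow> 'a \<times> 'a"
proof -
  assume t: "t \<in> {0..T}"
  interpret P: prob_space "\<mu> t" using prob[OF t] .
  have "(\<lambda>z. cos (w \<bullet> f z + p)) \<in> borel_measurable borel"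
    by (intro borel_measurable_continuous_onI continuous_intros that)
  then have m: "(\<lambda>z. cos (w \<bullet> f z + p)) \<in> borel_measurable (\<mu> t)" by (rule meas_mu[OF _ t])
  show ?thesis by (rule P.integrable_const_bound[where B=1]) (use m in auto)
qed

lemma cont_transport: "continuous_on UNIV (transport t0 s)"
  unfolding transport_def by (intro continuous_intros)

lemma core:
  fixes W A
  assumes Wd: "\<forall>X. open X \<longrightarrow> X \<noteq> {} \<longrightarrow> (\<exists>d\<in>W. d \<in> X)"
    and AT: "A \<subseteq> {0..T}"
    and PA: "\<And>t. t \<in> A \<Longrightarrow> good t \<and> (AE z in \<mu> t. norm z \<le> R) \<and> (\<forall>(w, p)\<in>W. Lc w p t = Q w p t)"
    and t0: "t0 \<in> A" and ts: "\<And>n. ts n \<in> A" "ts \<longlonglongrightarrow> t0"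
  shows "(\<lambda>n. \<integral>z. cos (w \<bullet> transport t0 (ts n) z + p) \<partial>\<mu> (ts n)) \<longlonglongrightarrow> (\<integral>z. cos (w \<bullet> z + p) \<partial>\<mu> t0)"
proof (rule LIMSEQ_I)
  fix r :: real assume r: "r > 0"
  have R0: "R \<ge> 0" using Mpos Tpos unfolding R_def by auto
  define \<rho> where "\<rho> = r / 8 / (R + 1)"
  have \<rho>: "\<rho> > 0" "\<rho> * R + \<rho> = r / 8"
  proof -
    show "\<rho> > 0" using r R0 unfolding \<rho>_def by auto
    have "\<rho> * R + \<rho> = \<rho> * (R + 1)" by (simp add: algebra_simps)
    also have "\<dots> = r / 8" using R0 unfolding \<rho>_def by (simp add: field_simps)
    finally show "\<rho> * R + \<rho> = r / 8" .
  qed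
  obtain w' p' where wp: "(w', p') \<in> W" "dist (w', p') (w, p) < \<rho>"
    using Wd[rule_format, of "ball (w, p) \<rho>"] \<rho> by (auto simp: dist_commute)
  have ww: "norm (w - w') < \<rho>" "\<bar>p - p'\<bar> < \<rho>"
    using dist_fst_le[of "(w', p')" "(w, p)"] dist_snd_le[of "(w', p')" "(w, p)"] wp(2)
    by (auto simp: dist_norm norm_minus_commute)
  have gt0: "good t0" using PA[OF t0] by auto
  then have t0SE: "t0 \<in> SE" "t0 \<notin> Dc" unfolding good_def by auto
  then have ce: "continuous (at t0 within SE) e" unfolding Dc_def by auto
  define \<eta> where "\<eta> = r / 8 / (C1 w' + 1)"
  have \<eta>: "\<eta> > 0" "C1 w' * \<eta> \<le> r / 8"
    using r C_nonneg[of w'] unfolding \<eta>_def by (auto simp: field_simps)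
  from ce[unfolded continuous_within_eps_delta, rule_format, OF \<eta>(1)] obtain \<delta> where
    \<delta>0: "\<delta> > 0" and \<delta>1: "\<forall>u\<in>SE. dist u t0 < \<delta> \<longrightarrow> dist (e u) (e t0) < \<eta>" by blast
  define \<delta>' where "\<delta>' = min \<delta> (r / 8 / ((norm w + 1) * (R + 1) + C0 w' + 1))"
  have \<delta>': "\<delta>' > 0" "\<delta>' \<le> \<delta>" "norm w * \<delta>' * R \<le> r / 8" "C0 w' * \<delta>' \<le> r / 8"
  proof -
    define K where "K = (norm w + 1) * (R + 1) + C0 w' + 1"
    have wR: "0 \<le> norm w * R" using R0 by simp
    have p1: "0 \<le> (norm w + 1) * (R + 1)" using R0 by simp
    have p2: "norm w * R \<le> (norm w + 1) * (R + 1)" using R0 by (simp add: algebra_simps)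
    have K: "K > 0" "norm w * R \<le> K" "C0 w' \<le> K" using C_nonneg[of w'] p1 p2 unfolding K_def
      by linarith+
    have d: "\<delta>' = min \<delta> (r / 8 / K)" unfolding \<delta>'_def K_def ..
    show "\<delta>' > 0" "\<delta>' \<le> \<delta>" using \<delta>0 r K unfolding d by auto
    have "\<delta>' * K \<le> r / 8" using K unfolding d by (simp add: min_def field_simps)
    moreover have "norm w * \<delta>' * R \<le> \<delta>' * K" using K \<delta>0 r unfolding d
      by (metis (no_types) d \<open>0 < \<delta>'\<close> less_eq_real_def mult.commute mult.left_commute mult_left_mono)
    moreover have "C0 w' * \<delta>' \<le> \<delta>' * K" using K \<open>0 < \<delta>'\<close> by (simp add: mult.commute mult_left_mono)
    ultimately show "norm w * \<delta>' * R \<le> r / 8" "C0 w' * \<delta>' \<le> r / 8" by linarith+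
  qed
  obtain n0 where n0: "\<And>n. n \<ge> n0 \<Longrightarrow> dist (ts n) t0 < \<delta>'"
    using ts(2) \<delta>'(1) unfolding lim_sequentially by blast
  show "\<exists>no. \<forall>n\<ge>no. norm ((\<integral>z. cos (w \<bullet> transport t0 (ts n) z + p) \<partial>\<mu> (ts n)) - (\<integral>z. cos (w \<bullet> z + p) \<partial>\<mu> t0)) < r"
  proof (intro exI allI impI)
    fix n assume n: "n \<ge> n0"
    define s where "s = ts n"
    have sA: "s \<in> A" unfolding s_def by (rule ts(1))
    have s: "s \<in> {0..T}" "good s" "AE z in \<mu> s. norm z \<le> R" "Lc w' p' s = Q w' p' s"
      using AT sA PA[OF sA] wp(1) by auto
    have t0': "t0 \<in> {0..T}" "AE z in \<mu> t0. norm z \<le> R" "Lc w' p' t0 = Q w' p' t0"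
      using AT t0 PA[OF t0] wp(1) by auto
    have st: "\<bar>s - t0\<bar> < \<delta>'" using n0[OF n] unfolding s_def dist_real_def .
    have ci: "\<And>t (f :: 'a \<times> 'a \<Rightarrow> 'a \<times> 'a) (w :: 'a \<times> 'a) p. continuous_on UNIV f \<Longrightarrow> t \<in> {0..T} \<Longrightarrow> integrable (\<mu> t) (\<lambda>z. cos (w \<bullet> f z + p))"
      by (rule cos_integrable)
    have cid: "continuous_on UNIV (\<lambda>z::'a \<times> 'a. z)" by (rule continuous_on_id)
    have gen: "\<bar>(\<integral>z. cos (w \<bullet> transport t0 u z + p) \<partial>\<mu> u) - Q w' p' u\<bar> \<le> norm w * \<bar>u - t0\<bar> * R + r / 8"
      if u: "u \<in> {0..T}" "AE z in \<mu> u. norm z \<le> R" for u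
      unfolding Q_def
    proof (rule int_close[OF prob[OF u(1)] ci[OF cont_transport u(1)] ci[OF cid u(1)]])
      show "AE z in \<mu> u. \<bar>cos (w \<bullet> transport t0 u z + p) - cos (w' \<bullet> z + p')\<bar> \<le> norm w * \<bar>u - t0\<bar> * R + r / 8"
        using u(2)
      proof eventually_elim
        case (elim z)
        have "\<bar>cos (w \<bullet> transport t0 u z + p) - cos (w' \<bullet> z + p')\<bar> \<le> \<bar>(w \<bullet> transport t0 u z + p) - (w' \<bullet> z + p')\<bar>"
          by (rule cos_lip)
        also have "\<dots> \<le> \<bar>w \<bullet> transport t0 u z - w' \<bullet> z\<bar> + \<bar>p - p'\<bar>" by linarith
        also have "\<dots> \<le> (norm w * \<bar>u - t0\<bar> * norm z + norm (w - w') * norm z) + \<rho>"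
          using transport_inner_bound[of w t0 u z w'] ww by linarith
        also have "\<dots> \<le> (norm w * \<bar>u - t0\<bar> * R + \<rho> * R) + \<rho>"
          using elim ww by (intro add_mono mult_mono mult_left_mono) auto
        also have "\<dots> = norm w * \<bar>u - t0\<bar> * R + r / 8" using \<rho> by simp
        finally show ?case .
      qed
    qed
    have i1: "\<bar>(\<integral>z. cos (w \<bullet> transport t0 s z + p) \<partial>\<mu> s) - Q w' p' s\<bar> \<le> r / 8 + r / 8"
    proof -
      have "norm w * \<bar>s - t0\<bar> * R \<le> norm w * \<delta>' * R"
        using st R0 by (intro mult_right_mono mult_left_mono) auto
      then show ?thesis using gen[OF s(1) s(3)] \<delta>' by linarith
    qed
    have i3: "\<bar>(\<integral>z. cos (w \<bullet> z + p) \<partial>\<mu> t0) - Q w' p' t0\<bar> \<le> r / 8"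
      using gen[OF t0'(1) t0'(2)] by (simp add: transport_same)
    have i2: "\<bar>Q w' p' s - Q w' p' t0\<bar> \<le> r / 8 + r / 8"
    proof -
      have es: "\<bar>e s - e t0\<bar> < \<eta>"
        using \<delta>1 s(2) st \<delta>' unfolding good_def by (auto simp: dist_real_def)
      have "\<bar>Lc w' p' s - Lc w' p' t0\<bar> \<le> C0 w' * \<bar>s - t0\<bar> + C1 w' * \<bar>e s - e t0\<bar>"
      proof (cases "s \<le> t0")
        case True
        from Lc_diff[OF s(2) gt0 True, of w' p'] show ?thesis
          using True e_mono[of s t0] s(2) gt0 C_nonneg[of w'] unfolding good_def
          by (simp add: abs_minus_commute)
      next
        case False
        from Lc_diff[OF gt0 s(2), of w' p'] False show ?thesis
          using e_mono[of t0 s] s(2) gt0 C_nonneg[of w'] unfolding good_def by simp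
      qed
      also have "\<dots> \<le> C0 w' * \<delta>' + C1 w' * \<eta>"
        using st es C_nonneg[of w'] by (intro add_mono mult_left_mono) auto
      also have "\<dots> \<le> r / 8 + r / 8" using \<delta>' \<eta> by linarith
      finally show ?thesis using s(4) t0'(3) by simp
    qed
    have "\<bar>(\<integral>z. cos (w \<bullet> transport t0 s z + p) \<partial>\<mu> s) - (\<integral>z. cos (w \<bullet> z + p) \<partial>\<mu> t0)\<bar> \<le> 5 * r / 8"
      using i1 i2 i3 by linarith
    then show "norm ((\<integral>z. cos (w \<bullet> transport t0 (ts n) z + p) \<partial>\<mu> (ts n)) - (\<integral>z. cos (w \<bullet> z + p) \<partial>\<mu> t0)) < r"
      using r unfolding s_def by simp
  qed
qed

end



inductive trig :: "(('a::euclidean_space \<times> 'a) \<Rightarrow> real) \<Rightarrow> bool" where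
  gen: "trig (\<lambda>z. cos (w \<bullet> z + p))"
| add: "trig f \<Longrightarrow> trig g \<Longrightarrow> trig (\<lambda>z. f z + g z)"
| smul: "trig f \<Longrightarrow> trig (\<lambda>z. c * f z)"

lemma trig_const: "trig (\<lambda>z. c)"
  using trig.smul[OF trig.gen[of 0 0], of c] by simp

lemma trig_cont: "trig f \<Longrightarrow> continuous_on UNIV f"
  by (induction rule: trig.induct) (auto intro!: continuous_intros)

lemma trig_bounded: "trig f \<Longrightarrow> \<exists>B. \<forall>z. \<bar>f z\<bar> \<le> B"
proof (induction rule: trig.induct)
  case (gen w p) then show ?case by (intro exI[of _ 1]) auto
next
  case (add f g)
  then obtain B1 B2 where B: "\<And>z. \<bar>f z\<bar> \<le> B1" "\<And>z. \<bar>g z\<bar> \<le> B2" by blast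
  show ?case
  proof (intro exI[of _ "B1 + B2"] allI)
    fix z show "\<bar>f z + g z\<bar> \<le> B1 + B2" using B[of z] by linarith
  qed
next
  case (smul f c)
  then obtain B where B: "\<And>z. \<bar>f z\<bar> \<le> B" by blast
  show ?case
  proof (intro exI[of _ "\<bar>c\<bar> * B"] allI)
    fix z show "\<bar>c * f z\<bar> \<le> \<bar>c\<bar> * B" unfolding abs_mult by (rule mult_left_mono[OF B]) simp
  qed
qed

lemma trig_mult_gen: "trig g \<Longrightarrow> trig (\<lambda>z. cos (w \<bullet> z + p) * g z)"
proof (induction rule: trig.induct)
  case (gen w' p')
  have "(\<lambda>z. cos (w \<bullet> z + p) * cos (w' \<bullet> z + p')) =
        (\<lambda>z. (1/2) * cos ((w - w') \<bullet> z + (p - p')) + (1/2) * cos ((w + w') \<bullet> z + (p + p')))"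
    by (simp add: cos_times_cos fun_eq_iff inner_diff_left inner_add_left algebra_simps add_divide_distrib)
  show ?case unfolding \<open>(\<lambda>z. _) = _\<close> by (intro trig.add trig.smul trig.gen)
next
  case (add f g)
  then show ?case using trig.add[OF add.IH] by (simp add: distrib_left)
next
  case (smul f c)
  then show ?case using trig.smul[OF smul.IH, of c] by (simp add: mult.left_commute)
qed

lemma trig_mult: "trig f \<Longrightarrow> trig g \<Longrightarrow> trig (\<lambda>z. f z * g z)"
proof (induction arbitrary: g rule: trig.induct)
  case (gen w p) then show ?case by (rule trig_mult_gen)
next
  case (add f1 f2)
  then show ?case using trig.add[OF add.IH(1)[OF add.prems] add.IH(2)[OF add.prems]] by (simp add: distrib_right)
next
  case (smul f c)
  then show ?case using trig.smul[OF smul.IH[OF smul.prems], of c] by (simp add: mult.assoc)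
qed

lemma trig_sep:
  fixes x y :: "'a::euclidean_space \<times> 'a"
  assumes "x \<noteq> y" shows "\<exists>f. trig f \<and> f x \<noteq> f y"
proof -
  define w where "w = (pi / (norm (x - y))\<^sup>2) *\<^sub>R (x - y)"
  have n: "norm (x - y) \<noteq> 0" using assms by simp
  have "w \<bullet> x - w \<bullet> y = w \<bullet> (x - y)" by (simp add: inner_diff_right)
  also have "\<dots> = (pi / (norm (x - y))\<^sup>2) * ((x - y) \<bullet> (x - y))" by (simp add: w_def)
  also have "\<dots> = pi" using n by (simp add: power2_norm_eq_inner[symmetric])
  finally have "w \<bullet> x - w \<bullet> y = pi" .
  then have wy: "w \<bullet> y = w \<bullet> x - pi" by simp
  show ?thesis
  proof (cases "cos (w \<bullet> x) = 0")
    case False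
    have "cos (w \<bullet> x + 0) \<noteq> cos (w \<bullet> y + 0)" using False unfolding wy by (simp add: cos_diff)
    then show ?thesis using trig.gen[of w 0] by blast
  next
    case True
    then have "sin (w \<bullet> x) \<noteq> 0" using sin_cos_squared_add[of "w \<bullet> x"] by auto
    have c1: "cos (a + - (pi / 2)) = sin a" for a by (simp add: cos_diff)
    have "sin (w \<bullet> y) = - sin (w \<bullet> x)" unfolding wy by (simp add: sin_diff)
    then have "cos (w \<bullet> x + - (pi / 2)) \<noteq> cos (w \<bullet> y + - (pi / 2))"
      unfolding c1 using \<open>sin (w \<bullet> x) \<noteq> 0\<close> by simp
    then show ?thesis using trig.gen[of w "- (pi / 2)"] by blast
  qed
qed

lemma transport_norm: "norm (transport t0 s z) \<le> (1 + \<bar>s - t0\<bar>) * norm z"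
proof -
  have "norm (transport t0 s z) \<le> norm z + norm (transport t0 s z - z)"
    by (metis add.commute diff_add_cancel norm_triangle_ineq)
  moreover have "norm (transport t0 s z - z) \<le> \<bar>s - t0\<bar> * norm z"
  proof -
    have d: "transport t0 s z - z = (- ((s - t0) *\<^sub>R snd z), 0)"
      by (simp add: transport_def prod_eq_iff)
    show ?thesis unfolding d using norm_snd_le[of "snd z" "fst z"] by (simp add: mult_left_mono)
  qed
  ultimately show ?thesis by (simp add: algebra_simps)
qed

context CS begin

lemma integrable_bnd:
  "t \<in> {0..T} \<Longrightarrow> continuous_on UNIV g \<Longrightarrow> (\<And>z. \<bar>g z\<bar> \<le> B) \<Longrightarrow> integrable (\<mu> t) (g :: _ \<Rightarrow> real)"
proof -
  assume t: "t \<in> {0..T}" and c: "continuous_on UNIV g" and b: "\<And>z. \<bar>g z\<bar> \<le> B"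
  interpret P: prob_space "\<mu> t" using prob[OF t] .
  have "g \<in> borel_measurable (\<mu> t)" by (rule meas_mu[OF borel_measurable_continuous_onI[OF c] t])
  then show ?thesis by (intro P.integrable_const_bound[where B=B]) (auto intro: b)
qed

lemma trig_conv:
  fixes W A
  assumes Wd: "\<forall>X. open X \<longrightarrow> X \<noteq> {} \<longrightarrow> (\<exists>d\<in>W. d \<in> X)"
    and AT: "A \<subseteq> {0..T}"
    and PA: "\<And>t. t \<in> A \<Longrightarrow> good t \<and> (AE z in \<mu> t. norm z \<le> R) \<and> (\<forall>(w, p)\<in>W. Lc w p t = Q w p t)"
    and t0: "t0 \<in> A" and ts: "\<And>n. ts n \<in> A" "ts \<longlonglongrightarrow> t0"
  shows "trig h \<Longrightarrow> (\<lambda>n. \<integral>z. h (transport t0 (ts n) z) \<partial>\<mu> (ts n)) \<longlonglongrightarrow> (\<integral>z. h z \<partial>\<mu> t0)"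
proof (induction rule: trig.induct)
  case (gen w p) show ?case by (rule core[OF Wd AT PA t0 ts])
next
  case (add f g)
  have tsT: "ts n \<in> {0..T}" for n using ts(1)[of n] AT by auto
  have t0T: "t0 \<in> {0..T}" using t0 AT by auto
  obtain B1 where B1: "\<And>z. \<bar>f z\<bar> \<le> B1" using trig_bounded[OF add.hyps(1)] by auto
  obtain B2 where B2: "\<And>z. \<bar>g z\<bar> \<le> B2" using trig_bounded[OF add.hyps(2)] by auto
  have cf: "continuous_on UNIV f" "continuous_on UNIV g" using trig_cont add.hyps by auto
  have ct: "continuous_on UNIV (\<lambda>z. f (transport t0 s z))" "continuous_on UNIV (\<lambda>z. g (transport t0 s z))" for s
    by (rule continuous_on_compose2[OF cf(1) cont_transport], simp,
        rule continuous_on_compose2[OF cf(2) cont_transport], simp)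
  have "(\<integral>z. f (transport t0 (ts n) z) + g (transport t0 (ts n) z) \<partial>\<mu> (ts n)) =
        (\<integral>z. f (transport t0 (ts n) z) \<partial>\<mu> (ts n)) + (\<integral>z. g (transport t0 (ts n) z) \<partial>\<mu> (ts n))" for n
    by (rule Bochner_Integration.integral_add, rule integrable_bnd[OF tsT ct(1) B1], rule integrable_bnd[OF tsT ct(2) B2])
  moreover have "(\<integral>z. f z + g z \<partial>\<mu> t0) = (\<integral>z. f z \<partial>\<mu> t0) + (\<integral>z. g z \<partial>\<mu> t0)"
    by (rule Bochner_Integration.integral_add, rule integrable_bnd[OF t0T cf(1) B1], rule integrable_bnd[OF t0T cf(2) B2])
  ultimately show ?case using tendsto_add[OF add.IH] by simp
next
  case (smul f c)
  then show ?case using tendsto_mult_left[OF smul.IH, of c] by simp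
qed

lemma gen_conv:
  fixes W A and H :: "'a \<times> 'a \<Rightarrow> real"
  assumes Wd: "\<forall>X. open X \<longrightarrow> X \<noteq> {} \<longrightarrow> (\<exists>d\<in>W. d \<in> X)"
    and AT: "A \<subseteq> {0..T}"
    and PA: "\<And>t. t \<in> A \<Longrightarrow> good t \<and> (AE z in \<mu> t. norm z \<le> R) \<and> (\<forall>(w, p)\<in>W. Lc w p t = Q w p t)"
    and t0: "t0 \<in> A" and ts: "\<And>n. ts n \<in> A" "ts \<longlonglongrightarrow> t0"
    and H: "continuous_on UNIV H"
  shows "(\<lambda>n. \<integral>z. H (transport t0 (ts n) z) \<partial>\<mu> (ts n)) \<longlonglongrightarrow> (\<integral>z. H z \<partial>\<mu> t0)"
proof (rule LIMSEQ_I)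
  fix r :: real assume r: "r > 0"
  define K where "K = cball (0 :: 'a \<times> 'a) ((T + 1) * R)"
  have Kc: "compact K" unfolding K_def by simp
  obtain BH where BH: "\<And>z. z \<in> K \<Longrightarrow> \<bar>H z\<bar> \<le> BH"
    using compact_imp_bounded[OF compact_continuous_image[OF continuous_on_subset[OF H subset_UNIV] Kc]]
    unfolding bounded_iff by auto
  obtain h where h: "trig h" "\<And>z. z \<in> K \<Longrightarrow> \<bar>H z - h z\<bar> < r / 4"
  proof -
    have a1: "\<And>f. trig f \<Longrightarrow> continuous_on K f" using trig_cont continuous_on_subset by blast
    have a2: "\<And>f g. trig f \<and> trig g \<Longrightarrow> trig (\<lambda>x. f x + g x)" using trig.add by blast
    have a3: "\<And>f g. trig f \<and> trig g \<Longrightarrow> trig (\<lambda>x. f x * g x)" using trig_mult by blast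
    have a4: "\<And>x y. x \<in> K \<and> y \<in> K \<and> x \<noteq> y \<Longrightarrow> \<exists>f. trig f \<and> f x \<noteq> f y" using trig_sep by blast
    have a5: "continuous_on K H" using H continuous_on_subset by blast
    have r4: "0 < r / 4" using r by simp
    from Stone_Weierstrass_HOL[OF Kc trig_const a1 a2 a3 a4 a5 r4] that show ?thesis by blast
  qed
  note hc = trig_conv[OF Wd AT PA t0 ts h(1)]
  obtain Bh where Bh: "\<And>z. \<bar>h z\<bar> \<le> Bh" using trig_bounded[OF h(1)] by auto
  have inK: "AE z in \<mu> s. transport t0 s z \<in> K" if s: "s \<in> A" for s
  proof -
    have "AE z in \<mu> s. norm z \<le> R" using PA[OF s] by auto
    then show ?thesis
    proof eventually_elim
      case (elim z)
      have "s \<in> {0..T}" "t0 \<in> {0..T}" using AT s t0 by auto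
      then have "\<bar>s - t0\<bar> \<le> T" by (simp add: abs_le_iff)
      have "norm (transport t0 s z) \<le> (1 + \<bar>s - t0\<bar>) * norm z" by (rule transport_norm)
      also have "\<dots> \<le> (T + 1) * R" using elim \<open>\<bar>s - t0\<bar> \<le> T\<close> by (intro mult_mono) auto
      finally show ?case unfolding K_def by simp
    qed
  qed
  have cl: "\<bar>(\<integral>z. H (transport t0 s z) \<partial>\<mu> s) - (\<integral>z. h (transport t0 s z) \<partial>\<mu> s)\<bar> \<le> r / 4" if s: "s \<in> A" for s
  proof -
    have sT: "s \<in> {0..T}" using s AT by auto
    interpret P: prob_space "\<mu> s" using prob[OF sT] .
    have cH: "continuous_on UNIV (\<lambda>z. H (transport t0 s z))"
      by (rule continuous_on_compose2[OF H cont_transport]) simp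
    have ch: "continuous_on UNIV (\<lambda>z. h (transport t0 s z))"
      by (rule continuous_on_compose2[OF trig_cont[OF h(1)] cont_transport]) simp
    have iH: "integrable (\<mu> s) (\<lambda>z. H (transport t0 s z))"
    proof (rule P.integrable_const_bound[where B=BH])
      show "AE z in \<mu> s. norm (H (transport t0 s z)) \<le> BH" using inK[OF s] by eventually_elim (simp add: BH)
      show "(\<lambda>z. H (transport t0 s z)) \<in> borel_measurable (\<mu> s)"
        by (rule meas_mu[OF borel_measurable_continuous_onI[OF cH] sT])
    qed
    have ih: "integrable (\<mu> s) (\<lambda>z. h (transport t0 s z))"
      by (rule integrable_bnd[OF sT ch Bh])
    show ?thesis
    proof (rule int_close[OF prob[OF sT] iH ih])
      show "AE z in \<mu> s. \<bar>H (transport t0 s z) - h (transport t0 s z)\<bar> \<le> r / 4"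
        using inK[OF s] by eventually_elim (rule less_imp_le[OF h(2)])
    qed
  qed
  obtain n0 where n0: "\<And>n. n \<ge> n0 \<Longrightarrow> norm ((\<integral>z. h (transport t0 (ts n) z) \<partial>\<mu> (ts n)) - (\<integral>z. h z \<partial>\<mu> t0)) < r / 4"
    using LIMSEQ_D[OF hc, of "r/4"] r by auto
  show "\<exists>no. \<forall>n\<ge>no. norm ((\<integral>z. H (transport t0 (ts n) z) \<partial>\<mu> (ts n)) - (\<integral>z. H z \<partial>\<mu> t0)) < r"
  proof (intro exI allI impI)
    fix n assume n: "n \<ge> n0"
    have a: "\<bar>(\<integral>z. H (transport t0 (ts n) z) \<partial>\<mu> (ts n)) - (\<integral>z. h (transport t0 (ts n) z) \<partial>\<mu> (ts n))\<bar> \<le> r / 4"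
      by (rule cl[OF ts(1)])
    have b: "\<bar>(\<integral>z. H z \<partial>\<mu> t0) - (\<integral>z. h z \<partial>\<mu> t0)\<bar> \<le> r / 4"
      using cl[OF t0] by (simp add: transport_same)
    show "norm ((\<integral>z. H (transport t0 (ts n) z) \<partial>\<mu> (ts n)) - (\<integral>z. H z \<partial>\<mu> t0)) < r"
      using a b n0[OF n] r unfolding real_norm_def abs_le_iff abs_less_iff by linarith
  qed
qed

end



context CS begin

lemma rho_int:
  assumes s: "s \<in> {0..T}" and phic: "continuous_on UNIV \<phi>" and phin: "\<forall>y. 0 \<le> \<phi> y"
    and xic: "continuous_on UNIV \<xi>"
  shows "(\<integral>y. \<xi> y \<partial>rho_phi \<mu> t0 s \<phi>) = (\<integral>z. \<phi> (snd z) * \<xi> (fst (transport t0 s z)) \<partial>\<mu> s)"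
proof -
  define D0 where "D0 = distr (\<mu> s) borel (transport t0 s)"
  define D1 where "D1 = density D0 (\<lambda>z. ennreal (\<phi> (snd z)))"
  have tm: "transport t0 s \<in> measurable (\<mu> s) borel"
    using borel_measurable_continuous_onI[OF cont_transport[of t0 s]]
    unfolding measurable_cong_sets[OF sets_mu[OF s] refl] .
  have sD0: "sets D0 = sets borel" unfolding D0_def by simp
  have sD1: "sets D1 = sets borel" unfolding D1_def using sD0 by simp
  have xim: "\<xi> \<in> borel_measurable borel" by (rule borel_measurable_continuous_onI[OF xic])
  have phim: "(\<lambda>z::'a \<times> 'a. \<phi> (snd z)) \<in> borel_measurable borel"
    by (intro borel_measurable_continuous_onI continuous_on_compose2[OF phic] continuous_intros) auto
  have fm: "fst \<in> measurable D1 borel"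
    unfolding measurable_cong_sets[OF sD1 refl]
    by (rule borel_measurable_continuous_onI[OF continuous_on_fst[OF continuous_on_id]])
  have "(\<integral>y. \<xi> y \<partial>rho_phi \<mu> t0 s \<phi>) = (\<integral>y. \<xi> (fst y) \<partial>D1)"
    unfolding rho_phi_def D1_def[symmetric] D0_def[symmetric] by (rule integral_distr[OF fm xim])
  also have "\<dots> = (\<integral>y. \<phi> (snd y) *\<^sub>R \<xi> (fst y) \<partial>D0)"
    unfolding D1_def
  proof (rule integral_density)
    show "(\<lambda>y. \<xi> (fst y)) \<in> borel_measurable D0"
      unfolding measurable_cong_sets[OF sD0 refl]
      by (rule measurable_compose[OF borel_measurable_continuous_onI[OF continuous_on_fst[OF continuous_on_id]] xim])
    show "(\<lambda>z. \<phi> (snd z)) \<in> borel_measurable D0"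
      unfolding measurable_cong_sets[OF sD0 refl] by (rule phim)
    show "AE x in D0. 0 \<le> \<phi> (snd x)" using phin by simp
  qed
  also have "\<dots> = (\<integral>z. \<phi> (snd (transport t0 s z)) *\<^sub>R \<xi> (fst (transport t0 s z)) \<partial>\<mu> s)"
    unfolding D0_def
  proof (rule integral_distr[OF tm])
    show "(\<lambda>y. \<phi> (snd y) *\<^sub>R \<xi> (fst y)) \<in> borel_measurable borel"
      by (rule borel_measurable_scaleR[OF phim measurable_compose[OF borel_measurable_continuous_onI[OF continuous_on_fst[OF continuous_on_id]] xim]])
  qed
  also have "\<dots> = (\<integral>z. \<phi> (snd z) * \<xi> (fst (transport t0 s z)) \<partial>\<mu> s)"
    by (simp add: transport_def)
  finally show ?thesis .
qed

lemma main: "steadily_flowing T \<mu>"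
proof -
  obtain W :: "(('a \<times> 'a) \<times> real) set" where W: "countable W" "\<forall>X. open X \<longrightarrow> X \<noteq> {} \<longrightarrow> (\<exists>d\<in>W. d \<in> X)"
    using countable_dense_exists by blast
  have "\<forall>y\<in>W. AE t in lborel. t \<in> {0..T} \<longrightarrow> Lc (fst y) (snd y) t = Q (fst y) (snd y) t"
    using ident by blast
  then have AEW: "AE t in lborel. \<forall>y\<in>W. t \<in> {0..T} \<longrightarrow> Lc (fst y) (snd y) t = Q (fst y) (snd y) t"
    by (subst AE_ball_countable[OF W(1)], assumption)
  have AEall: "AE t in lborel. t \<in> {0..T} \<longrightarrow> good t \<and> (AE z in \<mu> t. norm z \<le> R) \<and> (\<forall>(w, p)\<in>W. Lc w p t = Q w p t)"
    using good_AE supp AEW by eventually_elim auto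
  from AEall obtain N0 where N0: "{t \<in> space lborel. \<not> (t \<in> {0..T} \<longrightarrow> good t \<and> (AE z in \<mu> t. norm z \<le> R) \<and> (\<forall>(w, p)\<in>W. Lc w p t = Q w p t))} \<subseteq> N0"
    "emeasure lborel N0 = 0" "N0 \<in> sets lborel" by (rule AE_E)
  define A where "A = {0..T} - N0"
  have AT: "A \<subseteq> {0..T}" unfolding A_def by auto
  have PA: "good t \<and> (AE z in \<mu> t. norm z \<le> R) \<and> (\<forall>(w, p)\<in>W. Lc w p t = Q w p t)" if "t \<in> A" for t
    using that N0(1) unfolding A_def by auto
  have null: "{0..T} - A \<in> null_sets lborel"
  proof -
    have "N0 \<in> null_sets lborel" using N0 by (intro null_setsI) auto
    then have "N0 \<inter> {0..T} \<in> null_sets lborel" by (rule null_set_Int2) simp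
    moreover have "{0..T} - A = N0 \<inter> {0..T}" unfolding A_def by auto
    ultimately show ?thesis by simp
  qed
  show ?thesis unfolding steadily_flowing_def
  proof (intro exI[of _ A] conjI AT null ballI allI impI)
    fix t0 ts and \<phi> \<xi> :: "'a \<Rightarrow> real"
    assume t0: "t0 \<in> A" and phi: "test_function \<phi> \<and> (\<forall>y. 0 \<le> \<phi> y)"
      and ts: "(\<forall>n. ts n \<in> A) \<and> ts \<longlonglongrightarrow> t0" and xi: "continuous_on UNIV \<xi> \<and> bounded (range \<xi>)"
    have phic: "continuous_on UNIV \<phi>"
      using phi unfolding test_function_def smooth_fun_def by auto
    define H where "H z = \<phi> (snd z) * \<xi> (fst z)" for z :: "'a \<times> 'a"
    have Hc: "continuous_on UNIV H" unfolding H_def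
      by (intro continuous_on_mult continuous_on_compose2[OF phic] continuous_on_compose2[OF conjunct1[OF xi]]
          continuous_intros) auto
    have ri: "(\<integral>y. \<xi> y \<partial>rho_phi \<mu> t0 s \<phi>) = (\<integral>z. H (transport t0 s z) \<partial>\<mu> s)" if "s \<in> A" for s
      using rho_int[of s \<phi> \<xi> t0] that AT phic phi xi unfolding H_def by (auto simp: transport_def)
    have "(\<lambda>n. \<integral>z. H (transport t0 (ts n) z) \<partial>\<mu> (ts n)) \<longlonglongrightarrow> (\<integral>z. H z \<partial>\<mu> t0)"
      by (rule gen_conv[OF W(2) AT PA t0 _ _ Hc]) (use ts in auto)
    moreover have "(\<integral>z. H z \<partial>\<mu> t0) = (\<integral>z. H (transport t0 t0 z) \<partial>\<mu> t0)" by (simp add: transport_same)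
    ultimately show "(\<lambda>n. \<integral>y. \<xi> y \<partial>rho_phi \<mu> t0 (ts n) \<phi>) \<longlonglongrightarrow> (\<integral>y. \<xi> y \<partial>rho_phi \<mu> t0 t0 \<phi>)"
      using ri[OF t0] ri ts by simp
  qed
qed

end

theorem mainTheorem11:
  fixes \<alpha> T M :: real
    and \<rho>0 :: "'a::euclidean_space measure" and u0 :: "'a \<Rightarrow> 'a"
    and N :: "nat \<Rightarrow> nat" and x v :: "nat \<Rightarrow> nat \<Rightarrow> real \<Rightarrow> 'a"
    and \<mu> :: "real \<Rightarrow> ('a \<times> 'a) measure" and \<rho> :: "real \<Rightarrow> 'a measure"
  assumes "T > 0" and "1 \<le> \<alpha>" and "\<alpha> \<le> 2"
    and "prob_space \<rho>0" and "sets \<rho>0 = sets borel"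
    and "\<exists>K. compact K \<and> emeasure \<rho>0 (UNIV - K) = 0"
    and "u0 \<in> borel_measurable \<rho>0" and "\<exists>C. AE y in \<rho>0. norm (u0 y) \<le> C"
    and "strict_mono N" and "\<forall>n. 0 < N n"
    and "\<forall>n. particle_solution \<alpha> T (N n) (x n) (v n)"
    and "\<forall>g :: 'a \<Rightarrow> real. continuous_on UNIV g \<and> bounded (range g) \<longrightarrow>
           (\<lambda>n. (\<Sum>i<N n. g (x n i 0)) / real (N n)) \<longlonglongrightarrow> (\<integral>y. g y \<partial>\<rho>0)"
    and "\<forall>g :: 'a \<Rightarrow> real. continuous_on UNIV g \<and> bounded (range g) \<longrightarrow>
           (\<lambda>n. (1 / real (N n)) *\<^sub>R (\<Sum>i<N n. g (x n i 0) *\<^sub>R v n i 0))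
             \<longlonglongrightarrow> (\<integral>y. g y *\<^sub>R u0 y \<partial>\<rho>0)"
    and "\<forall>n i t. i < N n \<and> t \<in> {0..T} \<longrightarrow>
           x n i t \<in> ball 0 ((T + 1) * M) \<and> v n i t \<in> ball 0 M"
    and "\<forall>t\<in>{0..T}. prob_space (\<mu> t) \<and> sets (\<mu> t) = sets borel"
    and "\<forall>g :: real \<times> ('a \<times> 'a) \<Rightarrow> real.
           continuous_on ({0..T} \<times> UNIV) g \<and> bounded (g ` ({0..T} \<times> UNIV)) \<longrightarrow>
             (\<lambda>t. \<integral>z. g (t, z) \<partial>\<mu> t) \<in> borel_measurable (restrict_space lborel {0..T}) \<and>
             (\<lambda>n. set_lebesgue_integral lborel {0..T}
                    (\<lambda>t. (\<Sum>i<N n. g (t, (x n i t, v n i t))) / real (N n)))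
               \<longlonglongrightarrow> set_lebesgue_integral lborel {0..T} (\<lambda>t. \<integral>z. g (t, z) \<partial>\<mu> t)"
    and "\<forall>G :: real \<times> (('a \<times> 'a) \<times> ('a \<times> 'a)) \<Rightarrow> real.
           continuous_on ({0..T} \<times> UNIV) G \<and> bounded (G ` ({0..T} \<times> UNIV)) \<longrightarrow>
             (\<lambda>t. \<integral>w. G (t, w) \<partial>(\<mu> t \<Otimes>\<^sub>M \<mu> t)) \<in> borel_measurable (restrict_space lborel {0..T}) \<and>
             (\<lambda>n. set_lebesgue_integral lborel {0..T}
                    (\<lambda>t. (\<Sum>i<N n. \<Sum>j<N n. G (t, ((x n i t, v n i t), (x n j t, v n j t))))
                          / (real (N n))\<^sup>2))
               \<longlonglongrightarrow> set_lebesgue_integral lborel {0..T} (\<lambda>t. \<integral>w. G (t, w) \<partial>(\<mu> t \<Otimes>\<^sub>M \<mu> t))"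
    and "\<forall>t\<in>{0..T}. finite_measure (\<rho> t) \<and> sets (\<rho> t) = sets borel"
    and "\<forall>\<epsilon>>0. \<exists>K. \<forall>n\<ge>K. \<forall>t\<in>{0..T}. \<forall>f :: 'a \<Rightarrow> real. bl_test f \<longrightarrow>
           \<bar>(\<Sum>i<N n. f (x n i t)) / real (N n) - (\<integral>y. f y \<partial>\<rho> t)\<bar> \<le> \<epsilon>"
    and "AE t in lborel. t \<in> {0..T} \<longrightarrow>
           (\<lambda>n. (\<Sum>i<N n. (norm (v n i t))\<^sup>2) / real (N n)) \<longlonglongrightarrow> (\<integral>z. (norm (snd z))\<^sup>2 \<partial>\<mu> t)"
  shows "steadily_flowing T \<mu>"
  proof -
  interpret CS \<alpha> T M N x v \<mu>
    using assms(1,2,3,10,11,14,15,16,20) by unfold_locales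
  show ?thesis by (rule main)
qed

end
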